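(* Work in a second-order (Bayes linear) belief framework with prevision $P(\cdot)$ and $\mathrm{Var}$, $\mathrm{Cov}$ derived from it, and for random vectors $Y,W$ let $P_W(Y)=P(Y)+\mathrm{Cov}(Y,W)\mathrm{Var}(W)^{\dagger}(W-P(W))$ be the adjusted expectation ($\dagger$ = Moore–Penrose inverse). Let $Z_{ij}=\mu_i+\mathcal R_{ij}$ ($i=1,\dots,m$, $j=1,\dots,n_i$) be random vectors where each $\mathcal R_{ij}$ has $P(\mathcal R_{ij})=0$, is uncorrelated with every $\mu_k$, distinct residuals are mutually uncorrelated, and $\mathrm{Var}(\mathcal R_{ij})$ does not depend on $j$. Let $\boldsymbol\mu=\mathrm{vec}(\mu_1,\dots,\mu_m)$ and suppose the quantity of interest satisfies $X=\boldsymbol{\mathcal A}\boldsymbol\mu+\boldsymbol U$, with $\boldsymbol{\mathcal A}$ a known matrix and $\boldsymbol U$ uncorrelated with all $\mu_i$ and $\mathcal R_{ij}$. Let $\overline Z_i=\frac1{n_i}\sum_{j=1}^{n_i}Z_{ij}$, $\overline{\boldsymbol Z}=(\overline Z_1,\dots,\overline Z_m)$ and $\mathcal Z=P_{\overline{\boldsymbol Z}}(\boldsymbol\mu)$. Then $P_{\mathcal Z}(X)\to\boldsymbol{\mathcal A}\boldsymbol\mu+P(\boldsymbol U)$ as $n_i\to\infty$ for all $i$.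
   Context: Convergence is in the second-order (Bayes linear) sense, i.e. in the norm $\|Y\|^2=P(Y^\intercal Y)$; in particular $\overline Z_i\to\mu_i$ in this sense as $n_i\to\infty$. *)

theory Defs
  imports "HOL-Probability.Probability"
begin

text \<open>Second-order (Bayes linear) framework rendered on a probability space M:
  prevision P = Lebesgue expectation, random vectors are families of square-integrable
  real random variables indexed by a finite index set; matrices are functions on
  (finite) index sets.\<close>

definition sq_int :: "'a measure \<Rightarrow> ('a \<Rightarrow> real) \<Rightarrow> bool" where
  "sq_int M f \<longleftrightarrow> f \<in> borel_measurable M \<and> integrable M (\<lambda>\<omega>. (f \<omega>)\<^sup>2)"

definition prev :: "'a measure \<Rightarrow> ('a \<Rightarrow> real) \<Rightarrow> real" where
  "prev M f = integral\<^sup>L M f"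

definition bl_cov :: "'a measure \<Rightarrow> ('a \<Rightarrow> real) \<Rightarrow> ('a \<Rightarrow> real) \<Rightarrow> real" where
  "bl_cov M f g = prev M (\<lambda>\<omega>. f \<omega> * g \<omega>) - prev M f * prev M g"

definition mmul :: "'k set \<Rightarrow> ('i \<Rightarrow> 'k \<Rightarrow> real) \<Rightarrow> ('k \<Rightarrow> 'j \<Rightarrow> real) \<Rightarrow> 'i \<Rightarrow> 'j \<Rightarrow> real" where
  "mmul K A B = (\<lambda>i j. \<Sum>k\<in>K. A i k * B k j)"

definition is_MP_inverse :: "'i set \<Rightarrow> 'j set \<Rightarrow> ('i \<Rightarrow> 'j \<Rightarrow> real) \<Rightarrow> ('j \<Rightarrow> 'i \<Rightarrow> real) \<Rightarrow> bool" where
  "is_MP_inverse I J A G \<longleftrightarrow>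
     (\<forall>j i. (j \<notin> J \<or> i \<notin> I) \<longrightarrow> G j i = 0) \<and>
     (\<forall>i\<in>I. \<forall>j\<in>J. mmul I (mmul J A G) A i j = A i j) \<and>
     (\<forall>j\<in>J. \<forall>i\<in>I. mmul J (mmul I G A) G j i = G j i) \<and>
     (\<forall>i\<in>I. \<forall>i'\<in>I. mmul J A G i i' = mmul J A G i' i) \<and>
     (\<forall>j\<in>J. \<forall>j'\<in>J. mmul I G A j j' = mmul I G A j' j)"

definition MP_inv :: "'i set \<Rightarrow> 'j set \<Rightarrow> ('i \<Rightarrow> 'j \<Rightarrow> real) \<Rightarrow> 'j \<Rightarrow> 'i \<Rightarrow> real" where
  "MP_inv I J A = (THE G. is_MP_inverse I J A G)"

definition adj_exp :: "'a measure \<Rightarrow> 'j set \<Rightarrow> ('j \<Rightarrow> 'a \<Rightarrow> real) \<Rightarrow> ('i \<Rightarrow> 'a \<Rightarrow> real) \<Rightarrow> 'i \<Rightarrow> 'a \<Rightarrow> real" where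
  "adj_exp M J W Y = (\<lambda>i \<omega>.
     let G = MP_inv J J (\<lambda>j k. bl_cov M (W j) (W k)) in
     prev M (Y i) + (\<Sum>j\<in>J. \<Sum>k\<in>J. bl_cov M (Y i) (W j) * G j k * (W k \<omega> - prev M (W k))))"

end

theory Submission
  imports Defs
begin


lemma mmul_assoc:
  assumes "finite J" "finite K"
  shows "mmul K (mmul J A B) C = mmul J A (mmul K B C)"
  unfolding mmul_def
  by (rule ext, rule ext) (simp add: sum_distrib_left sum_distrib_right mult.assoc sum.swap[of _ K J])

definition qf :: "'j set \<Rightarrow> ('j \<Rightarrow> real) \<Rightarrow> ('j \<Rightarrow> 'j \<Rightarrow> real) \<Rightarrow> ('j \<Rightarrow> real) \<Rightarrow> real" where
  "qf J x T y = (\<Sum>p\<in>J. \<Sum>q\<in>J. x p * T p q * y q)"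

lemma mmul3_qf:
  assumes "finite J"
  shows "mmul J (mmul J S T) S i j = qf J (\<lambda>p. S i p) T (\<lambda>q. S q j)"
  unfolding mmul_def qf_def
  apply (simp only: sum_distrib_right sum_distrib_left mult.assoc)
  by (rule sum.swap)

definition psd :: "'j set \<Rightarrow> ('j \<Rightarrow> 'j \<Rightarrow> real) \<Rightarrow> bool" where
  "psd J S \<longleftrightarrow> (\<forall>v. 0 \<le> qf J v S v)"

lemma qf_insert:
  assumes "finite J" "k \<notin> J"
  shows "qf (insert k J) x T y = x k * T k k * y k + (\<Sum>q\<in>J. x k * T k q * y q)
     + (\<Sum>p\<in>J. x p * T p k * y k) + qf J x T y"
  using assms unfolding qf_def by (simp add: sum.distrib algebra_simps)

lemma qf_cong:
  assumes "\<And>p. p \<in> J \<Longrightarrow> x p = x' p" "\<And>p q. p \<in> J \<Longrightarrow> q \<in> J \<Longrightarrow> T p q = T' p q"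
    "\<And>q. q \<in> J \<Longrightarrow> y q = y' q"
  shows "qf J x T y = qf J x' T' y'"
  unfolding qf_def using assms by (intro sum.cong refl) auto

lemma qf_diff_left: "qf J (\<lambda>p. x p - c * b p) T y = qf J x T y - c * qf J b T y"
  unfolding qf_def by (simp add: sum_subtractf sum_distrib_left left_diff_distrib mult.assoc)

lemma qf_diff_right: "qf J x T (\<lambda>p. y p - c * b p) = qf J x T y - c * qf J x T b"
  unfolding qf_def by (simp add: sum_subtractf sum_distrib_left right_diff_distrib mult.assoc mult.left_commute)

definition schurT where "schurT J k a b T' = (\<lambda>p q. if p = k \<and> q = k then 1/a + qf J b T' b / a^2
      else if p = k then - (\<Sum>p'\<in>J. b p' * T' p' q) / a
      else if q = k then - (\<Sum>q'\<in>J. T' p q' * b q') / a else T' p q)"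

lemma qf_schur:
  assumes fin: "finite J" and kJ: "k \<notin> J" and a: "a \<noteq> 0"
  shows "qf (insert k J) x (schurT J k a b T') y = x k * y k / a
     + qf J (\<lambda>p. x p - x k / a * b p) T' (\<lambda>q. y q - y k / a * b q)"
proof -
  define T where "T = schurT J k a b T'"
  have Tkq: "\<And>q. q \<in> J \<Longrightarrow> T k q = - (\<Sum>p'\<in>J. b p' * T' p' q) / a"
    using kJ by (auto simp: T_def schurT_def)
  have Tpk: "\<And>p. p \<in> J \<Longrightarrow> T p k = - (\<Sum>q'\<in>J. T' p q' * b q') / a"
    using kJ by (auto simp: T_def schurT_def)
  have "(\<Sum>q\<in>J. x k * T k q * y q) = (\<Sum>q\<in>J. x k * (- (\<Sum>p'\<in>J. b p' * T' p' q) / a) * y q)"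
    by (rule sum.cong) (simp_all add: Tkq)
  also have "\<dots> = - x k / a * (\<Sum>q\<in>J. \<Sum>p\<in>J. b p * T' p q * y q)"
    by (simp add: sum_distrib_left sum_distrib_right sum_negf algebra_simps sum_divide_distrib)
  finally have e1: "(\<Sum>q\<in>J. x k * T k q * y q) = - x k / a * (\<Sum>q\<in>J. \<Sum>p\<in>J. b p * T' p q * y q)" .
  have "(\<Sum>p\<in>J. x p * T p k * y k) = (\<Sum>p\<in>J. x p * (- (\<Sum>q'\<in>J. T' p q' * b q') / a) * y k)"
    by (rule sum.cong) (simp_all add: Tpk)
  also have "\<dots> = - y k / a * (\<Sum>p\<in>J. \<Sum>q\<in>J. x p * T' p q * b q)"
    by (simp add: sum_distrib_left sum_distrib_right sum_negf algebra_simps sum_divide_distrib)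
  finally have e2: "(\<Sum>p\<in>J. x p * T p k * y k) = - y k / a * (\<Sum>p\<in>J. \<Sum>q\<in>J. x p * T' p q * b q)" .
  have e3: "qf J x T y = qf J x T' y"
    using kJ by (intro qf_cong) (auto simp: T_def schurT_def)
  have e4: "x k * T k k * y k = x k * y k / a + x k * y k * qf J b T' b / a^2"
    by (simp add: T_def schurT_def algebra_simps)
  have sw: "(\<Sum>q\<in>J. \<Sum>p\<in>J. b p * T' p q * y q) = qf J b T' y"
    unfolding qf_def by (rule sum.swap)
  have rhs: "qf J (\<lambda>p. x p - x k / a * b p) T' (\<lambda>q. y q - y k / a * b q)
     = qf J x T' y - y k / a * qf J x T' b - x k / a * qf J b T' y + x k * y k * qf J b T' b / a^2"
    unfolding qf_diff_left qf_diff_right by (simp add: algebra_simps power2_eq_square)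
  show ?thesis
    using qf_insert[OF fin kJ, of x T y] unfolding T_def[symmetric] e1 e2 e3 e4 rhs sw
    unfolding qf_def by (simp add: algebra_simps)
qed

lemma psd_sub:
  assumes "finite J" "k \<notin> J" "psd (insert k J) S"
  shows "psd J S"
  unfolding psd_def
proof
  fix v
  have "0 \<le> qf (insert k J) (v(k:=0)) S (v(k:=0))" using assms(3) unfolding psd_def by blast
  also have "\<dots> = qf J (v(k:=0)) S (v(k:=0))" using qf_insert[OF assms(1,2), of "v(k:=0)" S "v(k:=0)"] by simp
  also have "\<dots> = qf J v S v" using assms(2) by (intro qf_cong) auto
  finally show "0 \<le> qf J v S v" .
qed

lemma sum_single:
  assumes "finite J" "q \<in> J" "\<And>p. p \<in> J \<Longrightarrow> p \<noteq> q \<Longrightarrow> g p = 0"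
  shows "sum g J = g q"
proof -
  have "sum g J = g q + sum g (J - {q})" using assms by (simp add: sum.remove)
  also have "sum g (J - {q}) = 0" using assms by (intro sum.neutral) auto
  finally show ?thesis by simp
qed

lemma psd_zero_row:
  assumes fin: "finite J" and kJ: "k \<notin> J" and psd: "psd (insert k J) S"
    and sym: "\<forall>i\<in>insert k J. \<forall>j\<in>insert k J. S i j = S j i" and a: "S k k = 0" and q: "q \<in> J"
  shows "S k q = 0"
proof (rule ccontr)
  assume ne: "S k q \<noteq> 0"
  define t where "t = - (S q q + 1) / (2 * S k q)"
  define v where "v = (\<lambda>p. if p = k then t else if p = q then 1 else (0::real))"
  have qk: "q \<noteq> k" using q kJ by auto
  have vk: "v k = t" and vq: "v q = 1" using qk by (auto simp: v_def)
  have v0: "\<And>p. p \<in> J \<Longrightarrow> p \<noteq> q \<Longrightarrow> v p = 0" using kJ by (auto simp: v_def)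
  have s1: "(\<Sum>q'\<in>J. v k * S k q' * v q') = t * S k q"
    by (subst sum_single[OF fin q]) (simp_all add: v0 vk vq)
  have s2: "(\<Sum>p\<in>J. v p * S p k * v k) = t * S k q"
  proof -
    have "S q k = S k q" using sym q by blast
    then show ?thesis by (subst sum_single[OF fin q]) (simp_all add: v0 vk vq)
  qed
  have s3: "qf J v S v = S q q"
    unfolding qf_def
    by (subst sum_single[OF fin q], simp add: v0, subst sum_single[OF fin q]) (simp_all add: v0 vq)
  have "0 \<le> qf (insert k J) v S v" using psd unfolding psd_def by blast
  also have "\<dots> = 2 * t * S k q + S q q"
    using qf_insert[OF fin kJ, of v S v] s1 s2 s3 a vk by simp
  also have "\<dots> = -1" using ne by (simp add: t_def field_simps)
  finally show False by simp
qed

lemma qf_zero_left: "qf J (\<lambda>_. 0) T y = 0" unfolding qf_def by simp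
lemma qf_zero_right: "qf J x T (\<lambda>_. 0) = 0" unfolding qf_def by simp

lemma qf_sub_mat: "qf J x (\<lambda>p q. A p q - B p q) y = qf J x A y - qf J x B y"
  unfolding qf_def by (simp add: sum_subtractf algebra_simps)

lemma qf_rank1: "qf J v (\<lambda>p q. b p * b q / a) v = (\<Sum>q\<in>J. b q * v q)^2 / a"
  unfolding qf_def power2_eq_square
  by (simp add: sum_distrib_left sum_distrib_right sum_divide_distrib algebra_simps)

lemma ginv_exists:
  assumes "finite J"
  shows "(\<forall>i\<in>J. \<forall>j\<in>J. S i j = S j i) \<longrightarrow> psd J S \<longrightarrow>
    (\<exists>T. (\<forall>i\<in>J. \<forall>j\<in>J. T i j = T j i) \<and> (\<forall>i\<in>J. \<forall>j\<in>J. qf J (\<lambda>p. S i p) T (\<lambda>q. S q j) = S i j))"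
  using assms
proof (induction J arbitrary: S rule: finite_induct)
  case empty
  show ?case by simp
next
  case (insert k J)
  note fin = insert(1) and kJ = insert(2)
  show ?case
  proof (intro impI)
    assume sym: "\<forall>i\<in>insert k J. \<forall>j\<in>insert k J. S i j = S j i" and psd: "psd (insert k J) S"
    have symJ: "\<forall>i\<in>J. \<forall>j\<in>J. S i j = S j i" using sym by blast
    have symk: "\<And>q. q \<in> J \<Longrightarrow> S q k = S k q" using sym by blast
    show "\<exists>T. (\<forall>i\<in>insert k J. \<forall>j\<in>insert k J. T i j = T j i) \<and>
      (\<forall>i\<in>insert k J. \<forall>j\<in>insert k J. qf (insert k J) (\<lambda>p. S i p) T (\<lambda>q. S q j) = S i j)"
    proof (cases "S k k = 0")
      case True
      have row: "\<And>q. q \<in> J \<Longrightarrow> S k q = 0" using psd_zero_row[OF fin kJ psd sym True] .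
      have col: "\<And>q. q \<in> J \<Longrightarrow> S q k = 0" using row symk by simp
      obtain T' where T'sym: "\<forall>i\<in>J. \<forall>j\<in>J. T' i j = T' j i"
        and T'g: "\<forall>i\<in>J. \<forall>j\<in>J. qf J (\<lambda>p. S i p) T' (\<lambda>q. S q j) = S i j"
        using insert.IH[of S] symJ psd_sub[OF fin kJ psd] by blast
      define T where "T = (\<lambda>p q. if p = k \<or> q = k then 0 else T' p q)"
      have qfT: "qf (insert k J) x T y = qf J x T' y" for x y
      proof -
        have "qf J x T y = qf J x T' y" using kJ by (intro qf_cong) (auto simp: T_def)
        then show ?thesis using qf_insert[OF fin kJ, of x T y] by (simp add: T_def)
      qed
      show ?thesis
      proof (intro exI[of _ T] conjI ballI)
        fix i j assume "i \<in> insert k J" "j \<in> insert k J"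
        then show "T i j = T j i" using T'sym by (auto simp: T_def)
      next
        fix i j assume i: "i \<in> insert k J" and j: "j \<in> insert k J"
        show "qf (insert k J) (\<lambda>p. S i p) T (\<lambda>q. S q j) = S i j"
          unfolding qfT
        proof (cases "i = k")
          case True
          have "qf J (\<lambda>p. S i p) T' (\<lambda>q. S q j) = qf J (\<lambda>_. 0) T' (\<lambda>q. S q j)"
            using True row by (intro qf_cong) auto
          moreover have "S i j = 0" using True j row \<open>S k k = 0\<close> by auto
          ultimately show "qf J (\<lambda>p. S i p) T' (\<lambda>q. S q j) = S i j" by (simp add: qf_zero_left)
        next
          case False
          then have iJ: "i \<in> J" using i by simp
          show "qf J (\<lambda>p. S i p) T' (\<lambda>q. S q j) = S i j"
          proof (cases "j = k")
            case True
            have "qf J (\<lambda>p. S i p) T' (\<lambda>q. S q j) = qf J (\<lambda>p. S i p) T' (\<lambda>_. 0)"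
              using True col by (intro qf_cong) auto
            moreover have "S i j = 0" using True iJ col by auto
            ultimately show ?thesis by (simp add: qf_zero_right)
          next
            case False
            then show ?thesis using iJ j T'g by simp
          qed
        qed
      qed
    next
      case False
      define a where "a = S k k"
      have a: "a \<noteq> 0" using False by (simp add: a_def)
      define b where "b = (\<lambda>p. S p k)"
      define S' where "S' = (\<lambda>p q. S p q - b p * b q / a)"
      have symS': "\<forall>i\<in>J. \<forall>j\<in>J. S' i j = S' j i"
        using symJ by (simp add: S'_def mult.commute)
      have psdS': "psd J S'"
        unfolding psd_def
      proof
        fix v
        define c where "c = (\<Sum>q\<in>J. b q * v q)"
        define w where "w = v(k := - c / a)"
        have wJ: "qf J w S w = qf J v S v" using kJ by (intro qf_cong) (auto simp: w_def)
        have w1: "(\<Sum>q\<in>J. w k * S k q * w q) = w k * c"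
          unfolding c_def sum_distrib_left using kJ symk
          by (intro sum.cong) (auto simp: w_def b_def)
        have w2: "(\<Sum>p\<in>J. w p * S p k * w k) = w k * c"
          unfolding c_def sum_distrib_left using kJ
          by (intro sum.cong) (auto simp: w_def b_def)
        have "0 \<le> qf (insert k J) w S w" using psd unfolding psd_def by blast
        also have "\<dots> = qf J v S v - c^2 / a"
          using qf_insert[OF fin kJ, of w S w] wJ w1 w2 a
          by (simp add: w_def a_def[symmetric] field_simps power2_eq_square)
        also have "\<dots> = qf J v S' v"
          unfolding S'_def qf_sub_mat qf_rank1 c_def ..
        finally show "0 \<le> qf J v S' v" .
      qed
      obtain T' where T'sym: "\<forall>i\<in>J. \<forall>j\<in>J. T' i j = T' j i"
        and T'g: "\<forall>i\<in>J. \<forall>j\<in>J. qf J (\<lambda>p. S' i p) T' (\<lambda>q. S' q j) = S' i j"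
        using insert.IH[of S'] symS' psdS' by blast
      define T where "T = schurT J k a b T'"
      have qfT: "qf (insert k J) x T y = x k * y k / a
          + qf J (\<lambda>p. x p - x k / a * b p) T' (\<lambda>q. y q - y k / a * b q)" for x y
        unfolding T_def by (rule qf_schur[OF fin kJ a])
      show ?thesis
      proof (intro exI[of _ T] conjI ballI)
        fix i j assume i: "i \<in> insert k J" and j: "j \<in> insert k J"
        have e: "(\<Sum>p'\<in>J. b p' * T' p' q) = (\<Sum>q'\<in>J. T' q q' * b q')" if "q \<in> J" for q
        proof (rule sum.cong)
          fix p' assume "p' \<in> J" then have "T' p' q = T' q p'" using T'sym that by blast
          then show "b p' * T' p' q = T' q p' * b p'" by simp
        qed simp
        show "T i j = T j i"
        proof (cases "i = k")
          case True
          then show ?thesis using j e by (cases "j = k") (simp_all add: T_def schurT_def)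
        next
          case False
          then have "i \<in> J" using i by simp
          show ?thesis
          proof (cases "j = k")
            case True
            then show ?thesis using \<open>i \<in> J\<close> e False by (simp add: T_def schurT_def)
          next
            case jk: False
            then have "j \<in> J" using j by simp
            then show ?thesis using \<open>i \<in> J\<close> T'sym False jk by (simp add: T_def schurT_def)
          qed
        qed
      next
        fix i j assume i: "i \<in> insert k J" and j: "j \<in> insert k J"
        have L: "qf J (\<lambda>p. S i p - S i k / a * b p) T' (\<lambda>q. S q j - S k j / a * b q)
           = (if i = k \<or> j = k then 0 else S' i j)"
        proof (cases "i = k")
          case True
          have "qf J (\<lambda>p. S i p - S i k / a * b p) T' (\<lambda>q. S q j - S k j / a * b q)
              = qf J (\<lambda>_. 0) T' (\<lambda>q. S q j - S k j / a * b q)"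
            using True a symk by (intro qf_cong) (auto simp: b_def a_def)
          then show ?thesis using True by (simp add: qf_zero_left)
        next
          case False
          then have iJ: "i \<in> J" using i by simp
          show ?thesis
          proof (cases "j = k")
            case True
            have "qf J (\<lambda>p. S i p - S i k / a * b p) T' (\<lambda>q. S q j - S k j / a * b q)
              = qf J (\<lambda>p. S i p - S i k / a * b p) T' (\<lambda>_. 0)"
              using True a by (intro qf_cong) (auto simp: b_def a_def)
            then show ?thesis using True by (simp add: qf_zero_right)
          next
            case False
            then have jJ: "j \<in> J" using j by simp
            have "qf J (\<lambda>p. S i p - S i k / a * b p) T' (\<lambda>q. S q j - S k j / a * b q)
              = qf J (\<lambda>p. S' i p) T' (\<lambda>q. S' q j)"
              using symk[OF jJ] by (intro qf_cong) (auto simp: S'_def b_def)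
            then show ?thesis using T'g iJ jJ \<open>i \<noteq> k\<close> False by simp
          qed
        qed
        show "qf (insert k J) (\<lambda>p. S i p) T (\<lambda>q. S q j) = S i j"
          unfolding qfT L
        proof (cases "i = k \<or> j = k")
          case True
          then show "S i k * S k j / a + (if i = k \<or> j = k then 0 else S' i j) = S i j"
            using a by (auto simp: a_def)
        next
          case False
          then have "S k j = b j" using j symk by (simp add: b_def)
          then show "S i k * S k j / a + (if i = k \<or> j = k then 0 else S' i j) = S i j"
            using False a by (simp add: S'_def b_def)
        qed
      qed
    qed
  qed
qed

definition tr :: "('i \<Rightarrow> 'j \<Rightarrow> real) \<Rightarrow> 'j \<Rightarrow> 'i \<Rightarrow> real" where "tr A = (\<lambda>i j. A j i)"

definition zo :: "'j set \<Rightarrow> ('j \<Rightarrow> 'j \<Rightarrow> real) \<Rightarrow> bool" where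
  "zo J A \<longleftrightarrow> (\<forall>i j. (i \<notin> J \<or> j \<notin> J) \<longrightarrow> A i j = 0)"

definition restr :: "'j set \<Rightarrow> ('j \<Rightarrow> 'j \<Rightarrow> real) \<Rightarrow> 'j \<Rightarrow> 'j \<Rightarrow> real" where
  "restr J A = (\<lambda>i j. if i \<in> J \<and> j \<in> J then A i j else 0)"

lemma tr_mmul: "tr (mmul J A B) = mmul J (tr B) (tr A)"
  unfolding tr_def mmul_def by (simp add: mult.commute)

lemma tr_tr[simp]: "tr (tr A) = A" unfolding tr_def by simp

lemma zo_restr: "zo J (restr J A)" unfolding zo_def restr_def by auto

lemma zo_mmul: "zo J A \<Longrightarrow> zo J B \<Longrightarrow> zo J (mmul J A B)"
  unfolding zo_def mmul_def by auto

lemma zo_mmul_left: "zo J A \<Longrightarrow> (\<forall>i j. j \<notin> J \<longrightarrow> B i j = 0) \<Longrightarrow> zo J (mmul J A B)"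
  unfolding zo_def mmul_def by auto

lemma zo_eq: "zo J A \<Longrightarrow> zo J B \<Longrightarrow> (\<And>i j. i \<in> J \<Longrightarrow> j \<in> J \<Longrightarrow> A i j = B i j) \<Longrightarrow> A = B"
  unfolding zo_def by (intro ext) metis

lemma mmul_cong_J:
  assumes "\<And>p. p \<in> J \<Longrightarrow> A i p = A' i p" "\<And>p. p \<in> J \<Longrightarrow> B p j = B' p j"
  shows "mmul J A B i j = mmul J A' B' i j"
  unfolding mmul_def using assms by (intro sum.cong) auto

lemma mmul_restr_left: "j \<in> J \<Longrightarrow> i \<in> J \<Longrightarrow> mmul J (restr J A) B i j = mmul J A B i j"
  by (rule mmul_cong_J) (auto simp: restr_def)

lemma tr_sym: "(\<And>i j. A i j = A j i) \<Longrightarrow> tr A = A"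
  unfolding tr_def by (intro ext) auto

lemma cancel_sym:
  assumes fin: "finite J" and sym: "\<And>i j. R i j = R j i"
    and z: "\<And>i j. i \<in> J \<Longrightarrow> j \<in> J \<Longrightarrow> mmul J R (mmul J R U) i j = 0"
    and i: "i \<in> J" and j: "j \<in> J"
  shows "mmul J R U i j = 0"
proof -
  have "(\<Sum>i\<in>J. (mmul J R U i j)^2) = (\<Sum>i\<in>J. \<Sum>p\<in>J. R i p * U p j * mmul J R U i j)"
    unfolding power2_eq_square by (simp add: mmul_def[of J R U] sum_distrib_right)
  also have "\<dots> = (\<Sum>p\<in>J. \<Sum>i\<in>J. R i p * U p j * mmul J R U i j)" by (rule sum.swap)
  also have "\<dots> = (\<Sum>p\<in>J. U p j * mmul J R (mmul J R U) p j)"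
    unfolding mmul_def[of J R "mmul J R U"] by (simp add: sum_distrib_left sym mult.commute mult.left_commute)
  also have "\<dots> = 0" using z j by simp
  finally have "(\<Sum>i\<in>J. (mmul J R U i j)^2) = 0" .
  then show ?thesis using fin i by (simp add: sum_nonneg_eq_0_iff)
qed

lemma MP_exists:
  fixes S :: "'a \<Rightarrow> 'a \<Rightarrow> real"
  assumes fin: "finite J" and symS: "\<And>i j. i \<in> J \<Longrightarrow> j \<in> J \<Longrightarrow> S i j = S j i"
  shows "\<exists>G. is_MP_inverse J J S G"
proof -
  define mm :: "('a \<Rightarrow> 'a \<Rightarrow> real) \<Rightarrow> ('a \<Rightarrow> 'a \<Rightarrow> real) \<Rightarrow> 'a \<Rightarrow> 'a \<Rightarrow> real"
    where "mm = mmul J"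
  have as: "\<And>A B C. mm (mm A B) C = mm A (mm B C)" unfolding mm_def using mmul_assoc[OF fin fin] .
  define R where "R = restr J S"
  have symR: "\<And>i j. R i j = R j i" unfolding R_def restr_def using symS by auto
  have trR: "tr R = R" by (rule tr_sym[OF symR])
  have zR: "zo J R" unfolding R_def by (rule zo_restr)
  define R2 where "R2 = mm R R"
  have zR2: "zo J R2" unfolding R2_def mm_def by (rule zo_mmul[OF zR zR])
  have trR2: "tr R2 = R2" unfolding R2_def mm_def tr_mmul trR ..
  have symR2: "\<And>i j. R2 i j = R2 j i" using trR2 unfolding tr_def by metis
  have psdR2: "psd J R2"
    unfolding psd_def
  proof
    fix v
    have "qf J v R2 v = (\<Sum>p\<in>J. \<Sum>q\<in>J. \<Sum>r\<in>J. v p * R p r * (R r q * v q))"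
      unfolding qf_def R2_def mm_def mmul_def
      by (simp add: sum_distrib_left sum_distrib_right mult.assoc)
    also have "\<dots> = (\<Sum>p\<in>J. \<Sum>r\<in>J. \<Sum>q\<in>J. v p * R p r * (R r q * v q))"
      by (rule sum.cong, rule refl, rule sum.swap)
    also have "\<dots> = (\<Sum>r\<in>J. \<Sum>p\<in>J. \<Sum>q\<in>J. v p * R p r * (R r q * v q))"
      by (rule sum.swap)
    also have "\<dots> = (\<Sum>r\<in>J. (\<Sum>p\<in>J. v p * R p r) * (\<Sum>q\<in>J. R r q * v q))"
      unfolding sum_product ..
    also have "\<dots> = (\<Sum>q\<in>J. (\<Sum>p\<in>J. v p * R p q) * (\<Sum>p\<in>J. v p * R p q))"
    proof (rule sum.cong, rule refl)
      fix r
      have "(\<Sum>q\<in>J. R r q * v q) = (\<Sum>p\<in>J. v p * R p r)"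
        by (rule sum.cong, rule refl) (metis symR mult.commute)
      then show "(\<Sum>p\<in>J. v p * R p r) * (\<Sum>q\<in>J. R r q * v q) = (\<Sum>p\<in>J. v p * R p r) * (\<Sum>p\<in>J. v p * R p r)"
        by simp
    qed
    also have "\<dots> \<ge> 0" by (intro sum_nonneg) simp
    finally show "0 \<le> qf J v R2 v" .
  qed
  obtain T0 where T0sym: "\<forall>i\<in>J. \<forall>j\<in>J. T0 i j = T0 j i"
    and T0g: "\<forall>i\<in>J. \<forall>j\<in>J. qf J (\<lambda>p. R2 i p) T0 (\<lambda>q. R2 q j) = R2 i j"
    using ginv_exists[OF fin, of R2] symR2 psdR2 by blast
  define T where "T = restr J T0"
  have zT: "zo J T" unfolding T_def by (rule zo_restr)
  have trT: "tr T = T" using T0sym unfolding T_def restr_def tr_def by (intro ext) auto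
  have F1: "mm (mm R2 T) R2 = R2"
  proof (rule zo_eq[of J])
    show "zo J (mm (mm R2 T) R2)" unfolding mm_def by (intro zo_mmul zR2 zT)
    show "zo J R2" by (rule zR2)
    fix i j assume i: "i \<in> J" and j: "j \<in> J"
    have "mm (mm R2 T) R2 i j = qf J (\<lambda>p. R2 i p) T (\<lambda>q. R2 q j)"
      unfolding mm_def by (rule mmul3_qf[OF fin])
    also have "\<dots> = qf J (\<lambda>p. R2 i p) T0 (\<lambda>q. R2 q j)"
      by (rule qf_cong) (auto simp: T_def restr_def)
    also have "\<dots> = R2 i j" using T0g i j by blast
    finally show "mm (mm R2 T) R2 i j = R2 i j" .
  qed
  define Id where "Id = (\<lambda>i j::'a. if i = j then 1 else (0::real))"
  have RId: "mm R Id = R"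
  proof (intro ext)
    fix i j
    show "mm R Id i j = R i j"
    proof (cases "j \<in> J")
      case True
      then show ?thesis unfolding mm_def mmul_def Id_def using fin
        by (simp add: if_distrib[of "\<lambda>x. R i _ * x"] cong: if_cong)
    next
      case False
      then show ?thesis using zR unfolding mm_def mmul_def Id_def zo_def
        by (auto intro!: sum.neutral)
    qed
  qed
  define U where "U = (\<lambda>i j. mm T R2 i j - Id i j)"
  have mmU: "\<And>X. mm X U = (\<lambda>i j. mm X (mm T R2) i j - mm X Id i j)"
    unfolding U_def mm_def mmul_def by (simp add: right_diff_distrib sum_subtractf)
  have "\<And>i j. mm R (mm R U) i j = 0"
  proof -
    fix i j
    have "mm R (mm R U) = mm R2 U" unfolding R2_def as ..
    also have "\<dots> = (\<lambda>i j. mm R2 (mm T R2) i j - mm R2 Id i j)" by (rule mmU)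
    also have "mm R2 (mm T R2) = R2" using F1 as by metis
    also have "mm R2 Id = R2" unfolding R2_def as RId ..
    finally show "mm R (mm R U) i j = 0" by simp
  qed
  then have "\<And>i j. i \<in> J \<Longrightarrow> j \<in> J \<Longrightarrow> mm R U i j = 0"
    unfolding mm_def by (rule cancel_sym[where R=R and U=U, OF fin symR]) auto
  then have F2: "mm R (mm T R2) = R"
  proof (intro zo_eq[of J])
    show "zo J (mm R (mm T R2))" unfolding mm_def by (intro zo_mmul zR2 zT zR)
    show "zo J R" by (rule zR)
    fix i j assume "i \<in> J" "j \<in> J" "\<And>i j. i \<in> J \<Longrightarrow> j \<in> J \<Longrightarrow> mm R U i j = 0"
    then have "mm R U i j = 0" by blast
    then show "mm R (mm T R2) i j = R i j" unfolding mmU RId by simp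
  qed
  have F3: "mm R2 (mm T R) = R"
  proof -
    have "tr (mm R (mm T R2)) = mm R2 (mm T R)"
      unfolding mm_def tr_mmul trR trR2 trT using as unfolding mm_def by metis
    then show ?thesis using F2 trR by metis
  qed
  have F2': "\<And>X. mm R (mm T (mm R (mm R X))) = mm R X"
    using F2 as unfolding R2_def by metis
  have F3': "\<And>X. mm R (mm R (mm T (mm R X))) = mm R X"
    using F3 as unfolding R2_def by metis
  have F2'': "mm R (mm T (mm R R)) = R" using F2 unfolding R2_def .
  have F3'': "mm R (mm R (mm T R)) = R" using F3 as unfolding R2_def by metis
  define G where "G = mm R (mm T (mm R (mm T R)))"
  define P where "P = mm R (mm T R)"
  have RG: "mm R G = P" unfolding G_def P_def using F3' by simp
  have GR: "mm G R = P" unfolding G_def P_def by (simp add: as F2'')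
  have trP: "tr P = P" unfolding P_def mm_def tr_mmul trR trT using as unfolding mm_def by metis
  have c1: "mm (mm R G) R = R" unfolding RG P_def as F2'' ..
  have c2: "mm (mm G R) G = G" unfolding GR P_def G_def as by (simp add: F3' F3'')
  have zG: "zo J G" unfolding G_def mm_def by (intro zo_mmul zR zT)
  show ?thesis
  proof (intro exI[of _ G])
    show "is_MP_inverse J J S G"
      unfolding is_MP_inverse_def
    proof (intro conjI ballI allI impI)
      fix j i assume "j \<notin> J \<or> i \<notin> J" then show "G j i = 0" using zG unfolding zo_def by blast
    next
      fix i j assume i: "i \<in> J" and j: "j \<in> J"
      have "mmul J (mmul J S G) S i j = mmul J (mmul J R G) R i j"
        using i j by (intro mmul_cong_J) (auto simp: R_def restr_def intro: mmul_cong_J)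
      also have "\<dots> = R i j" using c1 unfolding mm_def by simp
      finally show "mmul J (mmul J S G) S i j = S i j" using i j by (simp add: R_def restr_def)
    next
      fix i j assume i: "j \<in> J" and j: "i \<in> J"
      have "mmul J (mmul J G S) G j i = mmul J (mmul J G R) G j i"
        using i j by (intro mmul_cong_J) (auto simp: R_def restr_def intro: mmul_cong_J)
      also have "\<dots> = G j i" using c2 unfolding mm_def by simp
      finally show "mmul J (mmul J G S) G j i = G j i" .
    next
      fix i i' assume i: "i \<in> J" and j: "i' \<in> J"
      have e: "\<And>a b. a \<in> J \<Longrightarrow> b \<in> J \<Longrightarrow> mmul J S G a b = P a b"
        using RG unfolding mm_def by (metis R_def mmul_restr_left)
      show "mmul J S G i i' = mmul J S G i' i"
        using e[OF i j] e[OF j i] trP unfolding tr_def by metis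
    next
      fix i i' assume i: "i \<in> J" and j: "i' \<in> J"
      have e: "\<And>a b. a \<in> J \<Longrightarrow> b \<in> J \<Longrightarrow> mmul J G S a b = P a b"
        using GR unfolding mm_def
        by (metis (no_types, lifting) R_def restr_def mmul_cong_J)
      show "mmul J G S i i' = mmul J G S i' i"
        using e[OF i j] e[OF j i] trP unfolding tr_def by metis
    qed
  qed
qed

lemma MP_full:
  fixes S :: "'a \<Rightarrow> 'a \<Rightarrow> real"
  assumes fin: "finite J" and symS: "\<And>i j. i \<in> J \<Longrightarrow> j \<in> J \<Longrightarrow> S i j = S j i"
    and mp: "is_MP_inverse J J S G"
  shows "mmul J (mmul J (restr J S) G) (restr J S) = restr J S"
    "mmul J (mmul J G (restr J S)) G = G"
    "mmul J (tr G) (restr J S) = mmul J (restr J S) G"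
    "mmul J (restr J S) (tr G) = mmul J G (restr J S)"
proof -
  define R where "R = restr J S"
  have symR: "\<And>i j. R i j = R j i" unfolding R_def restr_def using symS by auto
  have trR: "tr R = R" by (rule tr_sym[OF symR])
  have zR: "zo J R" unfolding R_def by (rule zo_restr)
  have zG: "zo J G" using mp unfolding is_MP_inverse_def zo_def by blast
  have SR: "\<And>i j. i \<in> J \<Longrightarrow> j \<in> J \<Longrightarrow> R i j = S i j" unfolding R_def restr_def by simp
  have eRG: "\<And>i j. i \<in> J \<Longrightarrow> j \<in> J \<Longrightarrow> mmul J S G i j = mmul J R G i j"
    by (rule mmul_cong_J) (auto simp: SR)
  have eGR: "\<And>i j. i \<in> J \<Longrightarrow> j \<in> J \<Longrightarrow> mmul J G S i j = mmul J G R i j"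
    by (rule mmul_cong_J) (auto simp: SR)
  show "mmul J (mmul J (restr J S) G) (restr J S) = restr J S"
    unfolding R_def[symmetric]
  proof (rule zo_eq[of J])
    show "zo J (mmul J (mmul J R G) R)" by (intro zo_mmul zR zG)
    show "zo J R" by (rule zR)
    fix i j assume i: "i \<in> J" and j: "j \<in> J"
    have "mmul J (mmul J R G) R i j = mmul J (mmul J S G) S i j"
      using i j by (intro mmul_cong_J) (auto simp: SR eRG)
    also have "\<dots> = S i j" using mp i j unfolding is_MP_inverse_def by blast
    finally show "mmul J (mmul J R G) R i j = R i j" using SR i j by simp
  qed
  show "mmul J (mmul J G (restr J S)) G = G"
    unfolding R_def[symmetric]
  proof (rule zo_eq[of J])
    show "zo J (mmul J (mmul J G R) G)" by (intro zo_mmul zR zG)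
    show "zo J G" by (rule zG)
    fix i j assume i: "i \<in> J" and j: "j \<in> J"
    have "mmul J (mmul J G R) G i j = mmul J (mmul J G S) G i j"
      using i j by (intro mmul_cong_J) (auto simp: eGR SR intro: mmul_cong_J)
    also have "\<dots> = G i j" using mp i j unfolding is_MP_inverse_def by blast
    finally show "mmul J (mmul J G R) G i j = G i j" .
  qed
  have t1: "tr (mmul J R G) = mmul J R G"
  proof (rule zo_eq[of J])
    show "zo J (tr (mmul J R G))" using zo_mmul[OF zR zG] unfolding zo_def tr_def by blast
    show "zo J (mmul J R G)" by (intro zo_mmul zR zG)
    fix i j assume i: "i \<in> J" and j: "j \<in> J"
    have "mmul J S G j i = mmul J S G i j" using mp i j unfolding is_MP_inverse_def by blast
    then show "tr (mmul J R G) i j = mmul J R G i j" using i j eRG unfolding tr_def by simp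
  qed
  have t2: "tr (mmul J G R) = mmul J G R"
  proof (rule zo_eq[of J])
    show "zo J (tr (mmul J G R))" using zo_mmul[OF zG zR] unfolding zo_def tr_def by blast
    show "zo J (mmul J G R)" by (intro zo_mmul zR zG)
    fix i j assume i: "i \<in> J" and j: "j \<in> J"
    have "mmul J G S j i = mmul J G S i j" using mp i j unfolding is_MP_inverse_def by blast
    then show "tr (mmul J G R) i j = mmul J G R i j" using i j eGR unfolding tr_def by simp
  qed
  show "mmul J (tr G) (restr J S) = mmul J (restr J S) G"
    using t1 unfolding tr_mmul trR unfolding R_def .
  show "mmul J (restr J S) (tr G) = mmul J G (restr J S)"
    using t2 unfolding tr_mmul trR unfolding R_def .
qed

lemma MP_unique:
  fixes S :: "'a \<Rightarrow> 'a \<Rightarrow> real"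
  assumes fin: "finite J" and symS: "\<And>i j. i \<in> J \<Longrightarrow> j \<in> J \<Longrightarrow> S i j = S j i"
    and m1: "is_MP_inverse J J S G1" and m2: "is_MP_inverse J J S G2"
  shows "G1 = G2"
proof -
  define R where "R = restr J S"
  define mm :: "('a \<Rightarrow> 'a \<Rightarrow> real) \<Rightarrow> ('a \<Rightarrow> 'a \<Rightarrow> real) \<Rightarrow> 'a \<Rightarrow> 'a \<Rightarrow> real"
    where "mm = mmul J"
  have as: "\<And>A B C. mm (mm A B) C = mm A (mm B C)" unfolding mm_def using mmul_assoc[OF fin fin] .
  have symR: "\<And>i j. R i j = R j i" unfolding R_def restr_def using symS by auto
  have trR: "tr R = R" by (rule tr_sym[OF symR])
  note f1 = MP_full[where S=S, OF fin symS m1, folded R_def mm_def]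
  note f2 = MP_full[where S=S, OF fin symS m2, folded R_def mm_def]
  have Ralt: "R = mm R (mm (tr G) R)" if "mm (mm R G) R = R" for G
  proof -
    have "R = tr (mm (mm R G) R)" using that trR by simp
    also have "\<dots> = mm R (mm (tr G) R)" unfolding mm_def tr_mmul trR
      using mmul_assoc[OF fin fin] by metis
    finally show ?thesis .
  qed
  have "G1 = mm G1 (mm (tr G1) R)" using f1(2) f1(3) as by metis
  also have "\<dots> = mm G1 (mm (tr G1) (mm R (mm (tr G2) R)))" using Ralt[OF f2(1)] by simp
  also have "\<dots> = mm G1 (mm (mm (tr G1) R) (mm (tr G2) R))" by (simp add: as)
  also have "\<dots> = mm G1 (mm (mm R G1) (mm R G2))" using f1(3) f2(3) by simp
  also have "\<dots> = mm (mm (mm G1 R) G1) (mm R G2)" by (simp add: as)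
  also have "\<dots> = mm G1 (mm R G2)" using f1(2) by simp
  finally have e1: "G1 = mm G1 (mm R G2)" .
  have "G2 = mm (mm R (tr G2)) G2" using f2(2) f2(4) by simp
  also have "\<dots> = mm (mm (mm R (mm (tr G1) R)) (tr G2)) G2" using Ralt[OF f1(1)] by simp
  also have "\<dots> = mm (mm (mm R (tr G1)) (mm R (tr G2))) G2" by (simp add: as)
  also have "\<dots> = mm (mm (mm G1 R) (mm G2 R)) G2" using f1(4) f2(4) by simp
  also have "\<dots> = mm G1 (mm R (mm (mm G2 R) G2))" by (simp add: as)
  also have "\<dots> = mm G1 (mm R G2)" using f2(2) by simp
  finally show ?thesis using e1 by simp
qed

lemma MP_inv_prop:
  fixes S :: "'a \<Rightarrow> 'a \<Rightarrow> real"
  assumes fin: "finite J" and symS: "\<And>i j. i \<in> J \<Longrightarrow> j \<in> J \<Longrightarrow> S i j = S j i"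
  shows "is_MP_inverse J J S (MP_inv J J S)"
proof -
  obtain G where G: "is_MP_inverse J J S G" using MP_exists[where S=S, OF fin symS] by blast
  show ?thesis unfolding MP_inv_def
    by (rule theI[of _ G]) (use G MP_unique[where S=S, OF fin symS] in blast)+
qed



lemma sq_int_integrable: "prob_space M \<Longrightarrow> sq_int M f \<Longrightarrow> integrable M f"
  unfolding sq_int_def
  by (rule finite_measure.square_integrable_imp_integrable) (auto intro: prob_space.finite_measure)

lemma sq_int_meas: "sq_int M f \<Longrightarrow> f \<in> borel_measurable M"
  unfolding sq_int_def by simp

lemma abs_mult_le_sq: "\<bar>a * b\<bar> \<le> a\<^sup>2 + (b::real)\<^sup>2"
proof -
  have "0 \<le> (\<bar>a\<bar> - \<bar>b\<bar>)^2" by simp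
  then have "2 * (\<bar>a\<bar> * \<bar>b\<bar>) \<le> \<bar>a\<bar>^2 + \<bar>b\<bar>^2" by (simp add: power2_diff)
  moreover have "0 \<le> \<bar>a\<bar> * \<bar>b\<bar>" by simp
  ultimately show ?thesis unfolding abs_mult power2_abs by linarith
qed

lemma sq_int_mult: "sq_int M f \<Longrightarrow> sq_int M g \<Longrightarrow> integrable M (\<lambda>\<omega>. f \<omega> * g \<omega>)"
proof -
  assume f: "sq_int M f" and g: "sq_int M g"
  have i: "integrable M (\<lambda>\<omega>. (f \<omega>)\<^sup>2 + (g \<omega>)\<^sup>2)" using f g unfolding sq_int_def by auto
  show ?thesis
  proof (rule Bochner_Integration.integrable_bound[OF i])
    show "(\<lambda>\<omega>. f \<omega> * g \<omega>) \<in> borel_measurable M" using f g unfolding sq_int_def by auto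
    show "AE \<omega> in M. norm (f \<omega> * g \<omega>) \<le> norm ((f \<omega>)\<^sup>2 + (g \<omega>)\<^sup>2)"
    proof (rule AE_I2)
      fix \<omega>
      have "\<bar>f \<omega> * g \<omega>\<bar> \<le> (f \<omega>)\<^sup>2 + (g \<omega>)\<^sup>2"
        by (rule abs_mult_le_sq)
      then show "norm (f \<omega> * g \<omega>) \<le> norm ((f \<omega>)\<^sup>2 + (g \<omega>)\<^sup>2)" by simp
    qed
  qed
qed

lemma integrable_const_prob: "prob_space M \<Longrightarrow> integrable M (\<lambda>_. c::real)"
  by (rule finite_measure.integrable_const) (rule prob_space.finite_measure)

lemma sq_int_const: "prob_space M \<Longrightarrow> sq_int M (\<lambda>_. c)"
  unfolding sq_int_def by (auto intro: finite_measure.integrable_const prob_space.finite_measure)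

lemma sq_int_add: "sq_int M f \<Longrightarrow> sq_int M g \<Longrightarrow> sq_int M (\<lambda>\<omega>. f \<omega> + g \<omega>)"
proof -
  assume f: "sq_int M f" and g: "sq_int M g"
  have "integrable M (\<lambda>\<omega>. (f \<omega>)\<^sup>2 + (g \<omega>)\<^sup>2 + 2 * (f \<omega> * g \<omega>))"
    using f g sq_int_mult[OF f g] unfolding sq_int_def by auto
  moreover have "(\<lambda>\<omega>. (f \<omega>)\<^sup>2 + (g \<omega>)\<^sup>2 + 2 * (f \<omega> * g \<omega>)) = (\<lambda>\<omega>. (f \<omega> + g \<omega>)\<^sup>2)"
    by (simp add: power2_sum algebra_simps)
  ultimately show ?thesis using f g unfolding sq_int_def by auto
qed

lemma sq_int_cmult: "sq_int M f \<Longrightarrow> sq_int M (\<lambda>\<omega>. c * f \<omega>)"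
  unfolding sq_int_def by (simp add: power_mult_distrib borel_measurable_times)

lemma sq_int_diff: "sq_int M f \<Longrightarrow> sq_int M g \<Longrightarrow> sq_int M (\<lambda>\<omega>. f \<omega> - g \<omega>)"
  using sq_int_add[of M f "\<lambda>\<omega>. (-1) * g \<omega>"] sq_int_cmult[of M g "-1"] by simp

lemma sq_int_sum:
  assumes M: "prob_space M" and L: "finite L"
  shows "(\<And>l. l \<in> L \<Longrightarrow> sq_int M (g l)) \<Longrightarrow> sq_int M (\<lambda>\<omega>. \<Sum>l\<in>L. g l \<omega>)"
  using L
proof (induction L rule: finite_induct)
  case empty then show ?case using sq_int_const[OF M, of 0] by simp
next
  case (insert x F)
  then show ?case using sq_int_add[of M "g x" "\<lambda>\<omega>. \<Sum>l\<in>F. g l \<omega>"] by simp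
qed

lemma sq_int_cong: "sq_int M f \<Longrightarrow> (\<And>\<omega>. \<omega> \<in> space M \<Longrightarrow> f \<omega> = g \<omega>) \<Longrightarrow> sq_int M g"
proof -
  assume f: "sq_int M f" and e: "\<And>\<omega>. \<omega> \<in> space M \<Longrightarrow> f \<omega> = g \<omega>"
  have "g \<in> borel_measurable M" using f e measurable_cong[of M f g] unfolding sq_int_def by simp
  moreover have "integrable M (\<lambda>\<omega>. (g \<omega>)\<^sup>2)"
  proof -
    have "integrable M (\<lambda>\<omega>. (g \<omega>)\<^sup>2) = integrable M (\<lambda>\<omega>. (f \<omega>)\<^sup>2)"
      by (rule Bochner_Integration.integrable_cong) (auto simp: e)
    then show ?thesis using f unfolding sq_int_def by simp
  qed
  ultimately show ?thesis unfolding sq_int_def by simp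
qed

lemma prev_add: "integrable M f \<Longrightarrow> integrable M g \<Longrightarrow> prev M (\<lambda>\<omega>. f \<omega> + g \<omega>) = prev M f + prev M g"
  unfolding prev_def by simp

lemma prev_diff: "integrable M f \<Longrightarrow> integrable M g \<Longrightarrow> prev M (\<lambda>\<omega>. f \<omega> - g \<omega>) = prev M f - prev M g"
  unfolding prev_def by simp

lemma prev_cmult: "prev M (\<lambda>\<omega>. c * f \<omega>) = c * prev M f"
  unfolding prev_def by simp

lemma prev_const: "prob_space M \<Longrightarrow> prev M (\<lambda>_. c) = c"
  unfolding prev_def by (simp add: prob_space.prob_space)

lemma prev_sum: "finite L \<Longrightarrow> (\<And>l. l \<in> L \<Longrightarrow> integrable M (g l)) \<Longrightarrow>
   prev M (\<lambda>\<omega>. \<Sum>l\<in>L. g l \<omega>) = (\<Sum>l\<in>L. prev M (g l))"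
  unfolding prev_def by (rule Bochner_Integration.integral_sum) auto

lemma prev_cong: "(\<And>\<omega>. \<omega> \<in> space M \<Longrightarrow> f \<omega> = g \<omega>) \<Longrightarrow> prev M f = prev M g"
  unfolding prev_def by (rule Bochner_Integration.integral_cong) auto

lemma cov_cong: "(\<And>\<omega>. \<omega> \<in> space M \<Longrightarrow> f \<omega> = f' \<omega>) \<Longrightarrow> (\<And>\<omega>. \<omega> \<in> space M \<Longrightarrow> g \<omega> = g' \<omega>)
  \<Longrightarrow> bl_cov M f g = bl_cov M f' g'"
proof -
  assume a: "\<And>\<omega>. \<omega> \<in> space M \<Longrightarrow> f \<omega> = f' \<omega>" and b: "\<And>\<omega>. \<omega> \<in> space M \<Longrightarrow> g \<omega> = g' \<omega>"
  have "prev M f = prev M f'" by (rule prev_cong) (rule a)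
  moreover have "prev M g = prev M g'" by (rule prev_cong) (rule b)
  moreover have "prev M (\<lambda>\<omega>. f \<omega> * g \<omega>) = prev M (\<lambda>\<omega>. f' \<omega> * g' \<omega>)" by (rule prev_cong) (simp add: a b)
  ultimately show ?thesis unfolding bl_cov_def by simp
qed

lemma cov_sym: "bl_cov M f g = bl_cov M g f"
  unfolding bl_cov_def by (simp add: mult.commute)

lemma cov_aff2:
  assumes M: "prob_space M" and f: "sq_int M f" and L: "finite L" and g: "\<And>l. l \<in> L \<Longrightarrow> sq_int M (g l)"
  shows "bl_cov M f (\<lambda>\<omega>. c + (\<Sum>l\<in>L. \<gamma> l * g l \<omega>)) = (\<Sum>l\<in>L. \<gamma> l * bl_cov M f (g l))"
proof -
  have If: "integrable M f" by (rule sq_int_integrable[OF M f])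
  have Ig: "\<And>l. l \<in> L \<Longrightarrow> integrable M (g l)" using sq_int_integrable[OF M g] .
  have Ifg: "\<And>l. l \<in> L \<Longrightarrow> integrable M (\<lambda>\<omega>. f \<omega> * g l \<omega>)" using sq_int_mult[OF f g] .
  have e1: "prev M (\<lambda>\<omega>. f \<omega> * (c + (\<Sum>l\<in>L. \<gamma> l * g l \<omega>)))
      = c * prev M f + (\<Sum>l\<in>L. \<gamma> l * prev M (\<lambda>\<omega>. f \<omega> * g l \<omega>))"
  proof -
    have "prev M (\<lambda>\<omega>. f \<omega> * (c + (\<Sum>l\<in>L. \<gamma> l * g l \<omega>)))
        = prev M (\<lambda>\<omega>. c * f \<omega> + (\<Sum>l\<in>L. \<gamma> l * (f \<omega> * g l \<omega>)))"
      by (rule arg_cong[where f="prev M"], rule ext) (simp add: distrib_left sum_distrib_left mult.left_commute mult.commute)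
    also have "\<dots> = c * prev M f + (\<Sum>l\<in>L. \<gamma> l * prev M (\<lambda>\<omega>. f \<omega> * g l \<omega>))"
    proof -
      have "integrable M (\<lambda>\<omega>. \<Sum>l\<in>L. \<gamma> l * (f \<omega> * g l \<omega>))"
        using Ifg by (intro Bochner_Integration.integrable_sum) auto
      then have "prev M (\<lambda>\<omega>. c * f \<omega> + (\<Sum>l\<in>L. \<gamma> l * (f \<omega> * g l \<omega>)))
          = c * prev M f + prev M (\<lambda>\<omega>. \<Sum>l\<in>L. \<gamma> l * (f \<omega> * g l \<omega>))"
        using If by (simp add: prev_add prev_cmult)
      also have "prev M (\<lambda>\<omega>. \<Sum>l\<in>L. \<gamma> l * (f \<omega> * g l \<omega>)) = (\<Sum>l\<in>L. prev M (\<lambda>\<omega>. \<gamma> l * (f \<omega> * g l \<omega>)))"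
        using Ifg L by (intro prev_sum) auto
      finally show ?thesis by (simp add: prev_cmult)
    qed
    finally show ?thesis .
  qed
  have e2: "prev M (\<lambda>\<omega>. c + (\<Sum>l\<in>L. \<gamma> l * g l \<omega>)) = c + (\<Sum>l\<in>L. \<gamma> l * prev M (g l))"
  proof -
    have "integrable M (\<lambda>\<omega>. \<Sum>l\<in>L. \<gamma> l * g l \<omega>)"
      using Ig by (intro Bochner_Integration.integrable_sum) auto
    then have "prev M (\<lambda>\<omega>. c + (\<Sum>l\<in>L. \<gamma> l * g l \<omega>)) = c + prev M (\<lambda>\<omega>. \<Sum>l\<in>L. \<gamma> l * g l \<omega>)"
      using M integrable_const_prob[OF M, of c] by (simp add: prev_add prev_const)
    also have "prev M (\<lambda>\<omega>. \<Sum>l\<in>L. \<gamma> l * g l \<omega>) = (\<Sum>l\<in>L. prev M (\<lambda>\<omega>. \<gamma> l * g l \<omega>))"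
      using Ig L by (intro prev_sum) auto
    finally show ?thesis by (simp add: prev_cmult)
  qed
  have e3: "prev M f * (\<Sum>l\<in>L. \<gamma> l * prev M (g l)) = (\<Sum>l\<in>L. \<gamma> l * (prev M f * prev M (g l)))"
    by (simp add: sum_distrib_left mult.left_commute)
  have e4: "(\<Sum>l\<in>L. \<gamma> l * (prev M (\<lambda>\<omega>. f \<omega> * g l \<omega>) - prev M f * prev M (g l)))
     = (\<Sum>l\<in>L. \<gamma> l * prev M (\<lambda>\<omega>. f \<omega> * g l \<omega>)) - (\<Sum>l\<in>L. \<gamma> l * (prev M f * prev M (g l)))"
    by (simp add: right_diff_distrib sum_subtractf)
  have aux: "\<And>c x A B::real. (c * x + A) - x * (c + B) = A - x * B" by (simp add: distrib_left mult.commute)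
  have "bl_cov M f (\<lambda>\<omega>. c + (\<Sum>l\<in>L. \<gamma> l * g l \<omega>))
     = (c * prev M f + (\<Sum>l\<in>L. \<gamma> l * prev M (\<lambda>\<omega>. f \<omega> * g l \<omega>)))
       - prev M f * (c + (\<Sum>l\<in>L. \<gamma> l * prev M (g l)))"
    by (simp only: bl_cov_def e1 e2)
  also have "\<dots> = (\<Sum>l\<in>L. \<gamma> l * prev M (\<lambda>\<omega>. f \<omega> * g l \<omega>)) - prev M f * (\<Sum>l\<in>L. \<gamma> l * prev M (g l))"
    by (rule aux)
  also have "\<dots> = (\<Sum>l\<in>L. \<gamma> l * bl_cov M f (g l))"
    unfolding e3 bl_cov_def e4 ..
  finally show ?thesis .
qed

lemma cov_aff1:
  assumes M: "prob_space M" and f: "sq_int M f" and L: "finite L" and g: "\<And>l. l \<in> L \<Longrightarrow> sq_int M (g l)"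
  shows "bl_cov M (\<lambda>\<omega>. c + (\<Sum>l\<in>L. \<gamma> l * g l \<omega>)) f = (\<Sum>l\<in>L. \<gamma> l * bl_cov M (g l) f)"
proof -
  have "bl_cov M (\<lambda>\<omega>. c + (\<Sum>l\<in>L. \<gamma> l * g l \<omega>)) f = bl_cov M f (\<lambda>\<omega>. c + (\<Sum>l\<in>L. \<gamma> l * g l \<omega>))"
    by (rule cov_sym)
  also have "\<dots> = (\<Sum>l\<in>L. \<gamma> l * bl_cov M f (g l))" by (rule cov_aff2[OF assms])
  also have "\<dots> = (\<Sum>l\<in>L. \<gamma> l * bl_cov M (g l) f)"
    by (rule sum.cong, rule refl, subst cov_sym, rule refl)
  finally show ?thesis .
qed

lemma cov_diff1:
  assumes M: "prob_space M" and f: "sq_int M f" and g: "sq_int M g" and h: "sq_int M h"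
  shows "bl_cov M (\<lambda>\<omega>. f \<omega> - g \<omega>) h = bl_cov M f h - bl_cov M g h"
proof -
  have "(\<lambda>\<omega>. (f \<omega> - g \<omega>) * h \<omega>) = (\<lambda>\<omega>. f \<omega> * h \<omega> - g \<omega> * h \<omega>)" by (simp add: algebra_simps)
  then have e1: "prev M (\<lambda>\<omega>. (f \<omega> - g \<omega>) * h \<omega>) = prev M (\<lambda>\<omega>. f \<omega> * h \<omega>) - prev M (\<lambda>\<omega>. g \<omega> * h \<omega>)"
    using sq_int_mult[OF f h] sq_int_mult[OF g h] by (simp add: prev_diff)
  have e2: "prev M (\<lambda>\<omega>. f \<omega> - g \<omega>) = prev M f - prev M g"
    using sq_int_integrable[OF M f] sq_int_integrable[OF M g] by (rule prev_diff)
  show ?thesis unfolding bl_cov_def e1 e2 by (simp add: left_diff_distrib)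
qed

lemma prev_sq_sum:
  assumes M: "prob_space M" and e: "sq_int M e" and d: "sq_int M d"
  shows "prev M (\<lambda>\<omega>. (e \<omega> + d \<omega>)\<^sup>2) = prev M (\<lambda>\<omega>. (e \<omega>)\<^sup>2) + 2 * prev M (\<lambda>\<omega>. e \<omega> * d \<omega>) + prev M (\<lambda>\<omega>. (d \<omega>)\<^sup>2)"
proof -
  have "(\<lambda>\<omega>. (e \<omega> + d \<omega>)\<^sup>2) = (\<lambda>\<omega>. ((e \<omega>)\<^sup>2 + 2 * (e \<omega> * d \<omega>)) + (d \<omega>)\<^sup>2)"
    by (rule ext) (simp add: power2_sum)
  moreover have "integrable M (\<lambda>\<omega>. (e \<omega>)\<^sup>2)" "integrable M (\<lambda>\<omega>. (d \<omega>)\<^sup>2)"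
    using e d unfolding sq_int_def by auto
  moreover have "integrable M (\<lambda>\<omega>. e \<omega> * d \<omega>)" by (rule sq_int_mult[OF e d])
  ultimately show ?thesis unfolding prev_def by simp
qed

lemma cov_var_zero:
  assumes M: "prob_space M" and h: "sq_int M h" and y: "sq_int M y" and v: "bl_cov M h h = 0"
  shows "bl_cov M y h = 0"
proof -
  define m where "m = prev M h"
  have Ih: "integrable M h" by (rule sq_int_integrable[OF M h])
  have Iy: "integrable M y" by (rule sq_int_integrable[OF M y])
  have hm: "sq_int M (\<lambda>\<omega>. h \<omega> - m)" by (rule sq_int_diff[OF h sq_int_const[OF M]])
  have Ihm: "integrable M (\<lambda>\<omega>. (h \<omega> - m)\<^sup>2)" using hm unfolding sq_int_def by simp
  have Ih2: "integrable M (\<lambda>\<omega>. (h \<omega>)\<^sup>2)" using h unfolding sq_int_def by simp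
  have "prev M (\<lambda>\<omega>. (h \<omega> - m)\<^sup>2) = prev M (\<lambda>\<omega>. (h \<omega>)\<^sup>2 - 2 * m * h \<omega> + m\<^sup>2)"
    by (rule arg_cong[where f="prev M"], rule ext) (simp add: power2_diff)
  also have "\<dots> = prev M (\<lambda>\<omega>. (h \<omega>)\<^sup>2) - 2 * m * prev M h + m\<^sup>2"
    using Ih Ih2 integrable_const_prob[OF M] prob_space.prob_space[OF M] unfolding prev_def by simp
  also have "\<dots> = bl_cov M h h" unfolding bl_cov_def m_def by (simp add: power2_eq_square)
  finally have z: "prev M (\<lambda>\<omega>. (h \<omega> - m)\<^sup>2) = 0" using v by simp
  have "AE \<omega> in M. (h \<omega> - m)\<^sup>2 = 0"
    using z Ihm integral_nonneg_eq_0_iff_AE[of M "\<lambda>\<omega>. (h \<omega> - m)\<^sup>2"] unfolding prev_def by simp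
  then have "AE \<omega> in M. y \<omega> * (h \<omega> - m) = 0" by auto
  then have "prev M (\<lambda>\<omega>. y \<omega> * (h \<omega> - m)) = 0" unfolding prev_def by (rule integral_eq_zero_AE)
  moreover have "prev M (\<lambda>\<omega>. y \<omega> * (h \<omega> - m)) = bl_cov M y h"
  proof -
    have "prev M (\<lambda>\<omega>. y \<omega> * (h \<omega> - m)) = prev M (\<lambda>\<omega>. y \<omega> * h \<omega> - m * y \<omega>)"
      by (rule arg_cong[where f="prev M"], rule ext) (simp add: right_diff_distrib mult.commute)
    also have "\<dots> = prev M (\<lambda>\<omega>. y \<omega> * h \<omega>) - m * prev M y"
      using sq_int_mult[OF y h] Iy unfolding prev_def by simp
    finally show ?thesis unfolding bl_cov_def m_def by (simp add: mult.commute)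
  qed
  ultimately show ?thesis by simp
qed

lemma sum_swap3:
  "(\<Sum>p\<in>A. \<Sum>q\<in>B. \<Sum>s\<in>C. f p q s) = (\<Sum>s\<in>C. \<Sum>q\<in>B. \<Sum>p\<in>A. f p q s)"
proof -
  have "(\<Sum>p\<in>A. \<Sum>q\<in>B. \<Sum>s\<in>C. f p q s) = (\<Sum>p\<in>A. \<Sum>s\<in>C. \<Sum>q\<in>B. f p q s)"
    by (rule sum.cong, rule refl, rule sum.swap)
  also have "\<dots> = (\<Sum>s\<in>C. \<Sum>p\<in>A. \<Sum>q\<in>B. f p q s)" by (rule sum.swap)
  also have "\<dots> = (\<Sum>s\<in>C. \<Sum>q\<in>B. \<Sum>p\<in>A. f p q s)"
    by (rule sum.cong, rule refl, rule sum.swap)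
  finally show ?thesis .
qed

definition covmat :: "'a measure \<Rightarrow> ('j \<Rightarrow> 'a \<Rightarrow> real) \<Rightarrow> 'j \<Rightarrow> 'j \<Rightarrow> real" where
  "covmat M W = (\<lambda>j k. bl_cov M (W j) (W k))"

definition ae1 :: "'a measure \<Rightarrow> 'j set \<Rightarrow> ('j \<Rightarrow> 'a \<Rightarrow> real) \<Rightarrow> ('a \<Rightarrow> real) \<Rightarrow> 'a \<Rightarrow> real" where
  "ae1 M J W y = (\<lambda>\<omega>. prev M y + (\<Sum>j\<in>J. \<Sum>k\<in>J. bl_cov M y (W j) * MP_inv J J (covmat M W) j k * (W k \<omega> - prev M (W k))))"

lemma adj_exp_ae1: "adj_exp M J W Y i = ae1 M J W (Y i)"
  unfolding adj_exp_def ae1_def covmat_def Let_def by simp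

definition aecoef :: "'a measure \<Rightarrow> 'j set \<Rightarrow> ('j \<Rightarrow> 'a \<Rightarrow> real) \<Rightarrow> ('a \<Rightarrow> real) \<Rightarrow> 'j \<Rightarrow> real" where
  "aecoef M J W y = (\<lambda>k. \<Sum>j\<in>J. bl_cov M y (W j) * MP_inv J J (covmat M W) j k)"

lemma ae1_aff:
  "ae1 M J W y = (\<lambda>\<omega>. (prev M y - (\<Sum>k\<in>J. aecoef M J W y k * prev M (W k))) + (\<Sum>k\<in>J. aecoef M J W y k * W k \<omega>))"
proof (rule ext)
  fix \<omega>
  define G where "G = MP_inv J J (covmat M W)"
  have "(\<Sum>j\<in>J. \<Sum>k\<in>J. bl_cov M y (W j) * G j k * (W k \<omega> - prev M (W k)))
      = (\<Sum>k\<in>J. \<Sum>j\<in>J. bl_cov M y (W j) * G j k * (W k \<omega> - prev M (W k)))" by (rule sum.swap)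
  also have "\<dots> = (\<Sum>k\<in>J. aecoef M J W y k * (W k \<omega> - prev M (W k)))"
    unfolding aecoef_def G_def[symmetric] by (simp add: sum_distrib_right)
  also have "\<dots> = (\<Sum>k\<in>J. aecoef M J W y k * W k \<omega>) - (\<Sum>k\<in>J. aecoef M J W y k * prev M (W k))"
    by (simp add: right_diff_distrib sum_subtractf)
  finally show "ae1 M J W y \<omega> = (prev M y - (\<Sum>k\<in>J. aecoef M J W y k * prev M (W k))) + (\<Sum>k\<in>J. aecoef M J W y k * W k \<omega>)"
    unfolding ae1_def G_def by simp
qed

lemma sq_int_aff:
  assumes M: "prob_space M" and fin: "finite J" and W: "\<And>j. j \<in> J \<Longrightarrow> sq_int M (W j)"
  shows "sq_int M (\<lambda>\<omega>. c + (\<Sum>k\<in>J. b k * W k \<omega>))"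
  by (intro sq_int_add sq_int_const[OF M] sq_int_sum[OF M fin] sq_int_cmult W)

lemma sq_int_ae1:
  assumes M: "prob_space M" and fin: "finite J" and W: "\<And>j. j \<in> J \<Longrightarrow> sq_int M (W j)"
  shows "sq_int M (ae1 M J W y)"
  unfolding ae1_aff by (rule sq_int_aff[OF M fin W])

lemma ae1_orth:
  assumes M: "prob_space M" and fin: "finite J" and W: "\<And>j. j \<in> J \<Longrightarrow> sq_int M (W j)"
    and y: "sq_int M y" and l: "l \<in> J"
  shows "bl_cov M (\<lambda>\<omega>. y \<omega> - ae1 M J W y \<omega>) (W l) = 0"
proof -
  define S where "S = covmat M W"
  define G where "G = MP_inv J J S"
  have symS: "\<And>i j. i \<in> J \<Longrightarrow> j \<in> J \<Longrightarrow> S i j = S j i" unfolding S_def covmat_def by (simp add: cov_sym)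
  have mp: "is_MP_inverse J J S G" unfolding G_def by (rule MP_inv_prop[where S=S, OF fin symS])
  have SGS: "\<And>i j. i \<in> J \<Longrightarrow> j \<in> J \<Longrightarrow> mmul J (mmul J S G) S i j = S i j"
    using mp unfolding is_MP_inverse_def by blast
  define C where "C = (\<lambda>j. bl_cov M y (W j))"
  define b where "b = aecoef M J W y"
  have b_eq: "\<And>k. b k = (\<Sum>j\<in>J. C j * G j k)" unfolding b_def aecoef_def C_def G_def S_def by simp
  define r where "r = (\<lambda>l. C l - (\<Sum>k\<in>J. b k * S k l))"
  have covr: "bl_cov M (\<lambda>\<omega>. y \<omega> - ae1 M J W y \<omega>) (W l) = r l" if l: "l \<in> J" for l
  proof -
    have "bl_cov M (\<lambda>\<omega>. y \<omega> - ae1 M J W y \<omega>) (W l) = C l - bl_cov M (ae1 M J W y) (W l)"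
      unfolding C_def by (rule cov_diff1[OF M y sq_int_ae1[OF M fin W] W[OF l]])
    also have "bl_cov M (ae1 M J W y) (W l) = (\<Sum>k\<in>J. b k * S k l)"
      unfolding ae1_aff b_def S_def covmat_def by (rule cov_aff1[OF M W[OF l] fin W])
    finally show ?thesis unfolding r_def .
  qed
  define v where "v = (\<lambda>p. r p - (\<Sum>q\<in>J. \<Sum>s\<in>J. G p q * S q s * r s))"
  have Sv: "(\<Sum>p\<in>J. S t p * v p) = 0" if t: "t \<in> J" for t
  proof -
    have "(\<Sum>p\<in>J. S t p * (\<Sum>q\<in>J. \<Sum>s\<in>J. G p q * S q s * r s))
        = (\<Sum>p\<in>J. \<Sum>q\<in>J. \<Sum>s\<in>J. S t p * G p q * S q s * r s)"
      by (simp add: sum_distrib_left mult.assoc)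
    also have "\<dots> = (\<Sum>s\<in>J. \<Sum>q\<in>J. \<Sum>p\<in>J. S t p * G p q * S q s * r s)" by (rule sum_swap3)
    also have "\<dots> = (\<Sum>s\<in>J. mmul J (mmul J S G) S t s * r s)"
      unfolding mmul_def by (simp add: sum_distrib_right)
    also have "\<dots> = (\<Sum>s\<in>J. S t s * r s)"
      by (rule sum.cong, rule refl) (simp add: SGS t)
    finally show ?thesis unfolding v_def by (simp add: right_diff_distrib sum_subtractf)
  qed
  define h where "h = (\<lambda>\<omega>. 0 + (\<Sum>p\<in>J. v p * W p \<omega>))"
  have sh: "sq_int M h" unfolding h_def by (rule sq_int_aff[OF M fin W])
  have covWh: "bl_cov M (W p) h = 0" if p: "p \<in> J" for p
  proof -
    have "bl_cov M (W p) h = (\<Sum>q\<in>J. v q * bl_cov M (W p) (W q))"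
      unfolding h_def by (rule cov_aff2[OF M W[OF p] fin W])
    also have "\<dots> = (\<Sum>q\<in>J. S p q * v q)" unfolding S_def covmat_def by (simp add: mult.commute)
    also have "\<dots> = 0" by (rule Sv[OF p])
    finally show ?thesis .
  qed
  have "bl_cov M h h = (\<Sum>p\<in>J. v p * bl_cov M (W p) h)"
    using cov_aff1[where g=W and c=0 and \<gamma>=v and f=h, OF M sh fin W] unfolding h_def[symmetric] .
  also have "\<dots> = 0" by (simp add: covWh)
  finally have hh: "bl_cov M h h = 0" .
  have yh: "bl_cov M y h = 0" by (rule cov_var_zero[OF M sh y hh])
  have "bl_cov M y h = (\<Sum>p\<in>J. v p * C p)"
    unfolding h_def C_def by (rule cov_aff2[OF M y fin W])
  also have "\<dots> = (\<Sum>p\<in>J. r p * C p) - (\<Sum>p\<in>J. \<Sum>q\<in>J. \<Sum>s\<in>J. G p q * S q s * r s * C p)"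
    unfolding v_def by (simp add: left_diff_distrib sum_subtractf sum_distrib_right)
  also have "(\<Sum>p\<in>J. \<Sum>q\<in>J. \<Sum>s\<in>J. G p q * S q s * r s * C p) = (\<Sum>s\<in>J. \<Sum>q\<in>J. \<Sum>p\<in>J. G p q * S q s * r s * C p)"
    by (rule sum_swap3)
  also have "\<dots> = (\<Sum>s\<in>J. r s * (\<Sum>k\<in>J. b k * S k s))"
    unfolding b_eq by (simp add: sum_distrib_left sum_distrib_right mult.commute mult.left_commute)
  also have "(\<Sum>p\<in>J. r p * C p) - (\<Sum>s\<in>J. r s * (\<Sum>k\<in>J. b k * S k s)) = (\<Sum>p\<in>J. r p * r p)"
    unfolding r_def by (simp add: right_diff_distrib sum_subtractf)
  finally have "(\<Sum>p\<in>J. (r p)\<^sup>2) = 0" using yh by (simp add: power2_eq_square)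
  then have "r l = 0" using fin l by (simp add: sum_nonneg_eq_0_iff)
  then show ?thesis using covr[OF l] by simp
qed

lemma prev_aff:
  assumes M: "prob_space M" and L: "finite L" and g: "\<And>l. l \<in> L \<Longrightarrow> sq_int M (g l)"
  shows "prev M (\<lambda>\<omega>. c + (\<Sum>l\<in>L. \<gamma> l * g l \<omega>)) = c + (\<Sum>l\<in>L. \<gamma> l * prev M (g l))"
proof -
  have Ig: "\<And>l. l \<in> L \<Longrightarrow> integrable M (g l)" using sq_int_integrable[OF M g] .
  have "integrable M (\<lambda>\<omega>. \<Sum>l\<in>L. \<gamma> l * g l \<omega>)"
    using Ig by (intro Bochner_Integration.integrable_sum) auto
  then have "prev M (\<lambda>\<omega>. c + (\<Sum>l\<in>L. \<gamma> l * g l \<omega>)) = c + prev M (\<lambda>\<omega>. \<Sum>l\<in>L. \<gamma> l * g l \<omega>)"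
    using M integrable_const_prob[OF M, of c] by (simp add: prev_add prev_const)
  also have "prev M (\<lambda>\<omega>. \<Sum>l\<in>L. \<gamma> l * g l \<omega>) = (\<Sum>l\<in>L. prev M (\<lambda>\<omega>. \<gamma> l * g l \<omega>))"
    using Ig L by (intro prev_sum) auto
  finally show ?thesis by (simp add: prev_cmult)
qed

lemma blp:
  assumes M: "prob_space M" and fin: "finite J" and W: "\<And>j. j \<in> J \<Longrightarrow> sq_int M (W j)"
    and y: "sq_int M y"
  shows "prev M (\<lambda>\<omega>. (y \<omega> - ae1 M J W y \<omega>)\<^sup>2) \<le> prev M (\<lambda>\<omega>. (y \<omega> - (c + (\<Sum>k\<in>J. \<beta> k * W k \<omega>)))\<^sup>2)"
proof -
  define b where "b = aecoef M J W y"
  define a0 where "a0 = prev M y - (\<Sum>k\<in>J. b k * prev M (W k))"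
  have yh: "ae1 M J W y = (\<lambda>\<omega>. a0 + (\<Sum>k\<in>J. b k * W k \<omega>))" unfolding ae1_aff a0_def b_def ..
  define e where "e = (\<lambda>\<omega>. y \<omega> - ae1 M J W y \<omega>)"
  have se: "sq_int M e" unfolding e_def by (rule sq_int_diff[OF y sq_int_ae1[OF M fin W]])
  have Ee: "prev M e = 0"
  proof -
    have "prev M e = prev M y - prev M (ae1 M J W y)"
      unfolding e_def by (rule prev_diff[OF sq_int_integrable[OF M y] sq_int_integrable[OF M sq_int_ae1[OF M fin W]]])
    also have "prev M (ae1 M J W y) = a0 + (\<Sum>k\<in>J. b k * prev M (W k))"
      unfolding yh by (rule prev_aff[OF M fin W])
    finally show ?thesis unfolding a0_def by simp
  qed
  define d where "d = (\<lambda>\<omega>. (a0 - c) + (\<Sum>k\<in>J. (b k - \<beta> k) * W k \<omega>))"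
  have sd: "sq_int M d" unfolding d_def by (rule sq_int_aff[OF M fin W])
  have pw: "y \<omega> - (c + (\<Sum>k\<in>J. \<beta> k * W k \<omega>)) = e \<omega> + d \<omega>" for \<omega>
    unfolding e_def d_def yh by (simp add: left_diff_distrib sum_subtractf)
  have ced: "bl_cov M e d = 0"
  proof -
    have "bl_cov M e d = (\<Sum>k\<in>J. (b k - \<beta> k) * bl_cov M e (W k))"
      unfolding d_def by (rule cov_aff2[OF M se fin W])
    also have "\<dots> = 0" using ae1_orth[where W=W, OF M fin W y] unfolding e_def by simp
    finally show ?thesis .
  qed
  have Eed: "prev M (\<lambda>\<omega>. e \<omega> * d \<omega>) = 0" using ced Ee unfolding bl_cov_def by simp
  have "prev M (\<lambda>\<omega>. (y \<omega> - (c + (\<Sum>k\<in>J. \<beta> k * W k \<omega>)))\<^sup>2) = prev M (\<lambda>\<omega>. (e \<omega> + d \<omega>)\<^sup>2)"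
    unfolding pw ..
  also have "\<dots> = prev M (\<lambda>\<omega>. (e \<omega>)\<^sup>2) + prev M (\<lambda>\<omega>. (d \<omega>)\<^sup>2)"
    using prev_sq_sum[OF M se sd] Eed by simp
  also have "\<dots> \<ge> prev M (\<lambda>\<omega>. (e \<omega>)\<^sup>2)"
    unfolding prev_def by simp
  finally show ?thesis unfolding e_def .
qed



lemma cov_add1:
  assumes M: "prob_space M" and f: "sq_int M f" and g: "sq_int M g" and h: "sq_int M h"
  shows "bl_cov M (\<lambda>\<omega>. f \<omega> + g \<omega>) h = bl_cov M f h + bl_cov M g h"
proof -
  have "(\<lambda>\<omega>. (f \<omega> + g \<omega>) * h \<omega>) = (\<lambda>\<omega>. f \<omega> * h \<omega> + g \<omega> * h \<omega>)" by (simp add: distrib_right)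
  then have e1: "prev M (\<lambda>\<omega>. (f \<omega> + g \<omega>) * h \<omega>) = prev M (\<lambda>\<omega>. f \<omega> * h \<omega>) + prev M (\<lambda>\<omega>. g \<omega> * h \<omega>)"
    using sq_int_mult[OF f h] sq_int_mult[OF g h] by (simp add: prev_add)
  have e2: "prev M (\<lambda>\<omega>. f \<omega> + g \<omega>) = prev M f + prev M g"
    using sq_int_integrable[OF M f] sq_int_integrable[OF M g] by (rule prev_add)
  show ?thesis unfolding bl_cov_def e1 e2 by (simp add: distrib_right)
qed

lemma ae1_lin:
  assumes finL: "finite L"
    and py: "prev M y = p0 + (\<Sum>k\<in>L. a k * prev M (yk k))"
    and cy: "\<And>j. j \<in> J \<Longrightarrow> bl_cov M y (W j) = (\<Sum>k\<in>L. a k * bl_cov M (yk k) (W j))"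
  shows "ae1 M J W y \<omega> = p0 + (\<Sum>k\<in>L. a k * ae1 M J W (yk k) \<omega>)"
proof -
  define G where "G = MP_inv J J (covmat M W)"
  define F where "F = (\<lambda>j. \<Sum>k'\<in>J. G j k' * (W k' \<omega> - prev M (W k')))"
  have "ae1 M J W y \<omega> = prev M y + (\<Sum>j\<in>J. bl_cov M y (W j) * F j)"
    unfolding ae1_def F_def G_def by (simp add: sum_distrib_left mult.assoc)
  also have "(\<Sum>j\<in>J. bl_cov M y (W j) * F j) = (\<Sum>j\<in>J. (\<Sum>k\<in>L. a k * bl_cov M (yk k) (W j)) * F j)"
    by (rule sum.cong) (simp_all add: cy)
  also have "\<dots> = (\<Sum>k\<in>L. a k * (\<Sum>j\<in>J. bl_cov M (yk k) (W j) * F j))"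
    by (simp add: sum_distrib_right sum_distrib_left mult.assoc) (rule sum.swap)
  finally have "ae1 M J W y \<omega> = p0 + (\<Sum>k\<in>L. a k * (prev M (yk k) + (\<Sum>j\<in>J. bl_cov M (yk k) (W j) * F j)))"
    unfolding py by (simp add: distrib_left sum.distrib)
  moreover have "\<And>k. ae1 M J W (yk k) \<omega> = prev M (yk k) + (\<Sum>j\<in>J. bl_cov M (yk k) (W j) * F j)"
    unfolding ae1_def F_def G_def by (simp add: sum_distrib_left mult.assoc)
  ultimately show ?thesis by simp
qed

lemma sum_ind: "finite K \<Longrightarrow> k \<in> K \<Longrightarrow> (\<Sum>k'\<in>K. (if k' = k then 1 else 0) * f k') = (f k :: real)"
  by (simp add: if_distrib[of "\<lambda>x. x * _"] cong: if_cong)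

lemma blp_single:
  assumes M: "prob_space M" and fin: "finite J" and W: "\<And>j. j \<in> J \<Longrightarrow> sq_int M (W j)"
    and y: "sq_int M y" and k: "k \<in> J"
  shows "prev M (\<lambda>\<omega>. (y \<omega> - ae1 M J W y \<omega>)\<^sup>2) \<le> prev M (\<lambda>\<omega>. (y \<omega> - W k \<omega>)\<^sup>2)"
  using blp[OF M fin W y, where c=0 and \<beta>="\<lambda>k'. if k' = k then 1 else 0"] sum_ind[OF fin k]
  by simp

lemma sq_int_divide: "sq_int M f \<Longrightarrow> sq_int M (\<lambda>\<omega>. f \<omega> / c)"
proof -
  assume f: "sq_int M f"
  have "(\<lambda>\<omega>. f \<omega> / c) = (\<lambda>\<omega>. inverse c * f \<omega>)" by (rule ext) (simp add: divide_inverse mult.commute)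
  then show ?thesis using sq_int_cmult[OF f, of "inverse c"] by simp
qed

lemma aux_div: "(x::real) \<noteq> 0 \<Longrightarrow> a - (x * a + b) / x = - b / x"
  by (simp add: field_simps)

lemma sum_sq_var:
  assumes M: "prob_space M"
    and R: "\<And>j. 1 \<le> j \<Longrightarrow> sq_int M (R j)"
    and m0: "\<And>j. 1 \<le> j \<Longrightarrow> prev M (R j) = 0"
    and c0: "\<And>j l. 1 \<le> j \<Longrightarrow> 1 \<le> l \<Longrightarrow> j \<noteq> l \<Longrightarrow> bl_cov M (R j) (R l) = 0"
    and cv: "\<And>j. 1 \<le> j \<Longrightarrow> bl_cov M (R j) (R j) = V"
  shows "prev M (\<lambda>\<omega>. (\<Sum>j=1..n. R j \<omega>)\<^sup>2) = real n * V"
proof -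
  have pw: "(\<lambda>\<omega>. (\<Sum>j=1..n. R j \<omega>)\<^sup>2) = (\<lambda>\<omega>. \<Sum>j=1..n. \<Sum>l=1..n. R j \<omega> * R l \<omega>)"
    by (rule ext) (simp add: power2_eq_square sum_product)
  have E: "prev M (\<lambda>\<omega>. R j \<omega> * R l \<omega>) = (if j = l then V else 0)" if "j \<in> {1..n}" "l \<in> {1..n}" for j l
  proof -
    have "prev M (\<lambda>\<omega>. R j \<omega> * R l \<omega>) = bl_cov M (R j) (R l)"
      unfolding bl_cov_def using m0[of j] m0[of l] that by simp
    then show ?thesis using c0[of j l] cv[of j] that by auto
  qed
  have "prev M (\<lambda>\<omega>. \<Sum>j=1..n. \<Sum>l=1..n. R j \<omega> * R l \<omega>) = (\<Sum>j=1..n. prev M (\<lambda>\<omega>. \<Sum>l=1..n. R j \<omega> * R l \<omega>))"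
    by (rule prev_sum) (auto intro!: Bochner_Integration.integrable_sum sq_int_mult R)
  also have "\<dots> = (\<Sum>j=1..n. \<Sum>l=1..n. prev M (\<lambda>\<omega>. R j \<omega> * R l \<omega>))"
    by (rule sum.cong, rule refl, rule prev_sum) (auto intro!: sq_int_mult R)
  also have "\<dots> = (\<Sum>j=1..n. \<Sum>l=1..n. if j = l then V else 0)"
    by (intro sum.cong refl) (simp add: E)
  also have "\<dots> = real n * V" by simp
  finally show ?thesis unfolding pw .
qed

theorem lemma3p2:
  fixes M :: "'a measure"
    and m :: nat
    and D :: "nat \<Rightarrow> 'c set"
    and mu :: "nat \<Rightarrow> 'c \<Rightarrow> 'a \<Rightarrow> real"
    and Z :: "nat \<Rightarrow> nat \<Rightarrow> 'c \<Rightarrow> 'a \<Rightarrow> real"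
    and XI :: "'x set"
    and X U :: "'x \<Rightarrow> 'a \<Rightarrow> real"
    and A :: "'x \<Rightarrow> nat \<times> 'c \<Rightarrow> real"
  assumes M: "prob_space M"
    and finD: "\<And>i. i < m \<Longrightarrow> finite (D i)"
    and finXI: "finite XI"
    and L2_mu: "\<And>i c. i < m \<Longrightarrow> c \<in> D i \<Longrightarrow> sq_int M (mu i c)"
    and L2_Z: "\<And>i j c. i < m \<Longrightarrow> 1 \<le> j \<Longrightarrow> c \<in> D i \<Longrightarrow> sq_int M (Z i j c)"
    and L2_U: "\<And>x. x \<in> XI \<Longrightarrow> sq_int M (U x)"
    and R_mean: "\<And>i j c. i < m \<Longrightarrow> 1 \<le> j \<Longrightarrow> c \<in> D i \<Longrightarrow>
                   prev M (\<lambda>\<omega>. Z i j c \<omega> - mu i c \<omega>) = 0"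
    and R_mu: "\<And>i j c k c'. i < m \<Longrightarrow> 1 \<le> j \<Longrightarrow> c \<in> D i \<Longrightarrow> k < m \<Longrightarrow> c' \<in> D k \<Longrightarrow>
                 bl_cov M (\<lambda>\<omega>. Z i j c \<omega> - mu i c \<omega>) (mu k c') = 0"
    and R_R: "\<And>i j c k l c'. i < m \<Longrightarrow> 1 \<le> j \<Longrightarrow> c \<in> D i \<Longrightarrow> k < m \<Longrightarrow> 1 \<le> l \<Longrightarrow> c' \<in> D k \<Longrightarrow>
                 (i, j) \<noteq> (k, l) \<Longrightarrow>
                 bl_cov M (\<lambda>\<omega>. Z i j c \<omega> - mu i c \<omega>) (\<lambda>\<omega>. Z k l c' \<omega> - mu k c' \<omega>) = 0"
    and R_var: "\<And>i j c c'. i < m \<Longrightarrow> 1 \<le> j \<Longrightarrow> c \<in> D i \<Longrightarrow> c' \<in> D i \<Longrightarrow>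
                 bl_cov M (\<lambda>\<omega>. Z i j c \<omega> - mu i c \<omega>) (\<lambda>\<omega>. Z i j c' \<omega> - mu i c' \<omega>)
               = bl_cov M (\<lambda>\<omega>. Z i 1 c \<omega> - mu i c \<omega>) (\<lambda>\<omega>. Z i 1 c' \<omega> - mu i c' \<omega>)"
    and X_def: "\<And>x \<omega>. x \<in> XI \<Longrightarrow> \<omega> \<in> space M \<Longrightarrow>
                 X x \<omega> = (\<Sum>(i, c)\<in>Sigma {..<m} D. A x (i, c) * mu i c \<omega>) + U x \<omega>"
    and U_mu: "\<And>x i c. x \<in> XI \<Longrightarrow> i < m \<Longrightarrow> c \<in> D i \<Longrightarrow> bl_cov M (U x) (mu i c) = 0"
    and U_R: "\<And>x i j c. x \<in> XI \<Longrightarrow> i < m \<Longrightarrow> 1 \<le> j \<Longrightarrow> c \<in> D i \<Longrightarrow>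
                 bl_cov M (U x) (\<lambda>\<omega>. Z i j c \<omega> - mu i c \<omega>) = 0"
  shows "\<forall>\<epsilon>>0. \<exists>N. \<forall>n :: nat \<Rightarrow> nat. (\<forall>i<m. N \<le> n i) \<longrightarrow>
           (let K = Sigma {..<m} D;
                muvec = (\<lambda>(i, c). mu i c);
                Zbar = (\<lambda>(i, c) \<omega>. (\<Sum>j = 1..n i. Z i j c \<omega>) / real (n i));
                ZZ = adj_exp M K Zbar muvec;
                PX = adj_exp M K ZZ X
            in prev M (\<lambda>\<omega>. \<Sum>x\<in>XI. (PX x \<omega> - ((\<Sum>k\<in>K. A x k * muvec k \<omega>) + prev M (U x)))\<^sup>2) < \<epsilon>)"
proof (intro allI impI)
  fix \<epsilon> :: real assume eps: "\<epsilon> > 0"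
  define K where "K = Sigma {..<m} D"
  have finK: "finite K" unfolding K_def using finD by (intro finite_SigmaI) auto
  define muvec :: "nat \<times> 'c \<Rightarrow> 'a \<Rightarrow> real" where "muvec = (\<lambda>(i, c). mu i c)"
  define V where "V = (\<lambda>(i,c). bl_cov M (\<lambda>\<omega>. Z i 1 c \<omega> - mu i c \<omega>) (\<lambda>\<omega>. Z i 1 c \<omega> - mu i c \<omega>))"
  define CA where "CA = (\<Sum>x\<in>XI. \<Sum>k\<in>K. (A x k)\<^sup>2)"
  define SV where "SV = (\<Sum>k\<in>K. V k)"
  have kK: "fst k < m \<and> snd k \<in> D (fst k)" if "k \<in> K" for k using that unfolding K_def by auto
  have V0: "V k \<ge> 0" if k: "k \<in> K" for k
  proof -
    obtain i c where kic: "k = (i, c)" by (cases k)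
    have i: "i < m" and c: "c \<in> D i" using kK[OF k] kic by auto
    have "prev M (\<lambda>\<omega>. Z i 1 c \<omega> - mu i c \<omega>) = 0" using R_mean[OF i _ c, of 1] by simp
    then have "V k = prev M (\<lambda>\<omega>. (Z i 1 c \<omega> - mu i c \<omega>) * (Z i 1 c \<omega> - mu i c \<omega>))"
      unfolding V_def kic bl_cov_def by simp
    also have "\<dots> \<ge> 0" unfolding prev_def by (rule Bochner_Integration.integral_nonneg) simp
    finally show ?thesis .
  qed
  have CA0: "CA \<ge> 0" unfolding CA_def by (intro sum_nonneg) auto
  have SV0: "SV \<ge> 0" unfolding SV_def using V0 by (intro sum_nonneg) auto
  define N :: nat where "N = nat \<lceil>CA * SV / \<epsilon>\<rceil> + 1"
  have N1: "1 \<le> N" unfolding N_def by simp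
  have Neps: "CA * SV / real N < \<epsilon>"
  proof -
    have "CA * SV / \<epsilon> \<le> real (nat \<lceil>CA * SV / \<epsilon>\<rceil>)" by (rule real_nat_ceiling_ge)
    then have "CA * SV / \<epsilon> < real N" unfolding N_def by simp
    then have "CA * SV < real N * \<epsilon>" using eps by (simp add: pos_divide_less_eq)
    then show ?thesis using N1 by (simp add: pos_divide_less_eq mult.commute)
  qed
  show "\<exists>N. \<forall>n :: nat \<Rightarrow> nat. (\<forall>i<m. N \<le> n i) \<longrightarrow>
           (let K = Sigma {..<m} D;
                muvec = (\<lambda>(i, c). mu i c);
                Zbar = (\<lambda>(i, c) \<omega>. (\<Sum>j = 1..n i. Z i j c \<omega>) / real (n i));
                ZZ = adj_exp M K Zbar muvec;
                PX = adj_exp M K ZZ X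
            in prev M (\<lambda>\<omega>. \<Sum>x\<in>XI. (PX x \<omega> - ((\<Sum>k\<in>K. A x k * muvec k \<omega>) + prev M (U x)))\<^sup>2) < \<epsilon>)"
  proof (intro exI[of _ N] allI impI)
    fix n :: "nat \<Rightarrow> nat" assume nN: "\<forall>i<m. N \<le> n i"
    define Zbar where "Zbar = (\<lambda>(i, c) \<omega>. (\<Sum>j = 1..n i. Z i j c \<omega>) / real (n i))"
    define ZZ where "ZZ = adj_exp M K Zbar muvec"
    define PX where "PX = adj_exp M K ZZ X"
    have smu: "sq_int M (muvec k)" if k: "k \<in> K" for k
      using kK[OF k] L2_mu unfolding muvec_def by (cases k) auto
    have sZbar: "sq_int M (Zbar k)" if k: "k \<in> K" for k
    proof -
      obtain i c where kic: "k = (i, c)" by (cases k)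
      have i: "i < m" and c: "c \<in> D i" using kK[OF k] kic by auto
      have "sq_int M (\<lambda>\<omega>. (\<Sum>j = 1..n i. Z i j c \<omega>) / real (n i))"
        by (intro sq_int_divide sq_int_sum[OF M] L2_Z[OF i _ c]) auto
      then show ?thesis unfolding Zbar_def kic by simp
    qed
    have ZZae: "ZZ k = ae1 M K Zbar (muvec k)" for k unfolding ZZ_def adj_exp_ae1 ..
    have sZZ: "sq_int M (ZZ k)" for k unfolding ZZae by (rule sq_int_ae1[OF M finK sZbar])
    define dk where "dk = (\<lambda>k \<omega>. ae1 M K ZZ (muvec k) \<omega> - muvec k \<omega>)"
    have sdk: "sq_int M (dk k)" if k: "k \<in> K" for k
      unfolding dk_def by (rule sq_int_diff[OF sq_int_ae1[OF M finK sZZ] smu[OF k]])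
    have bound: "prev M (\<lambda>\<omega>. (dk k \<omega>)\<^sup>2) \<le> V k / real N" if k: "k \<in> K" for k
    proof -
      obtain i c where kic: "k = (i, c)" by (cases k)
      have i: "i < m" and c: "c \<in> D i" using kK[OF k] kic by auto
      define nn where "nn = n i"
      have Nnn: "N \<le> nn" using nN i unfolding nn_def by auto
      then have nn0: "real nn > 0" using N1 by simp
      define R where "R = (\<lambda>j \<omega>. Z i j c \<omega> - mu i c \<omega>)"
      have Rs: "sq_int M (R j)" if "1 \<le> j" for j
        unfolding R_def by (rule sq_int_diff[OF L2_Z[OF i that c] L2_mu[OF i c]])
      have varR: "prev M (\<lambda>\<omega>. (\<Sum>j=1..nn. R j \<omega>)\<^sup>2) = real nn * V k"
      proof (rule sum_sq_var[OF M Rs])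
        show "\<And>j. 1 \<le> j \<Longrightarrow> prev M (R j) = 0" unfolding R_def by (rule R_mean[OF i _ c])
        show "\<And>j l. 1 \<le> j \<Longrightarrow> 1 \<le> l \<Longrightarrow> j \<noteq> l \<Longrightarrow> bl_cov M (R j) (R l) = 0"
          unfolding R_def by (rule R_R[OF i _ c i _ c]) simp_all
        fix j :: nat assume j: "1 \<le> j"
        show "bl_cov M (R j) (R j) = V k"
          unfolding R_def V_def kic using R_var[OF i j c c] by simp
      qed
      have pw: "(muvec k \<omega> - Zbar k \<omega>)\<^sup>2 = (\<Sum>j=1..nn. R j \<omega>)\<^sup>2 / (real nn)\<^sup>2" for \<omega>
      proof -
        have "(\<Sum>j=1..nn. Z i j c \<omega>) = real nn * mu i c \<omega> + (\<Sum>j=1..nn. R j \<omega>)"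
          unfolding R_def by (simp add: sum_subtractf)
        then have "muvec k \<omega> - Zbar k \<omega> = mu i c \<omega> - (real nn * mu i c \<omega> + (\<Sum>j=1..nn. R j \<omega>)) / real nn"
          unfolding muvec_def Zbar_def kic nn_def by simp
        also have "\<dots> = - (\<Sum>j=1..nn. R j \<omega>) / real nn" using nn0 by (intro aux_div) simp
        finally have "muvec k \<omega> - Zbar k \<omega> = - (\<Sum>j=1..nn. R j \<omega>) / real nn" .
        then show ?thesis by (simp add: power_divide)
      qed
      have "prev M (\<lambda>\<omega>. (dk k \<omega>)\<^sup>2) = prev M (\<lambda>\<omega>. (muvec k \<omega> - ae1 M K ZZ (muvec k) \<omega>)\<^sup>2)"
        unfolding dk_def by (simp add: power2_commute)
      also have "\<dots> \<le> prev M (\<lambda>\<omega>. (muvec k \<omega> - ZZ k \<omega>)\<^sup>2)"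
        by (rule blp_single[OF M finK sZZ smu[OF k] k])
      also have "\<dots> = prev M (\<lambda>\<omega>. (muvec k \<omega> - ae1 M K Zbar (muvec k) \<omega>)\<^sup>2)"
        unfolding ZZae ..
      also have "\<dots> \<le> prev M (\<lambda>\<omega>. (muvec k \<omega> - Zbar k \<omega>)\<^sup>2)"
        by (rule blp_single[OF M finK sZbar smu[OF k] k])
      also have "\<dots> = prev M (\<lambda>\<omega>. (\<Sum>j=1..nn. R j \<omega>)\<^sup>2) / (real nn)\<^sup>2"
        unfolding pw prev_def by simp
      also have "\<dots> = V k / real nn" unfolding varR using nn0 by (simp add: power2_eq_square)
      also have "\<dots> \<le> V k / real N"
        using V0[OF k] Nnn N1 by (intro divide_left_mono) auto
      finally show ?thesis .
    qed
    have lin: "PX x \<omega> - ((\<Sum>k\<in>K. A x k * muvec k \<omega>) + prev M (U x)) = (\<Sum>k\<in>K. A x k * dk k \<omega>)"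
      if x: "x \<in> XI" and \<omega>: "\<omega> \<in> space M" for x \<omega>
    proof -
      have sU: "sq_int M (U x)" by (rule L2_U[OF x])
      have covUZbar: "bl_cov M (U x) (Zbar l) = 0" if l: "l \<in> K" for l
      proof -
        obtain i c where lic: "l = (i, c)" by (cases l)
        have i: "i < m" and c: "c \<in> D i" using kK[OF l] lic by auto
        have covUZ: "bl_cov M (U x) (Z i j c) = 0" if j: "j \<in> {1..n i}" for j
        proof -
          have j1: "1 \<le> j" using j by simp
          have "bl_cov M (U x) (Z i j c) = bl_cov M (Z i j c) (U x)" by (rule cov_sym)
          also have "\<dots> = bl_cov M (\<lambda>\<omega>. (Z i j c \<omega> - mu i c \<omega>) + mu i c \<omega>) (U x)" by simp
          also have "\<dots> = bl_cov M (\<lambda>\<omega>. Z i j c \<omega> - mu i c \<omega>) (U x) + bl_cov M (mu i c) (U x)"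
            by (rule cov_add1[OF M sq_int_diff[OF L2_Z[OF i j1 c] L2_mu[OF i c]] L2_mu[OF i c] sU])
          also have "\<dots> = bl_cov M (U x) (\<lambda>\<omega>. Z i j c \<omega> - mu i c \<omega>) + bl_cov M (U x) (mu i c)"
            by (simp add: cov_sym[of M "U x"])
          also have "\<dots> = 0" using U_R[OF x i j1 c] U_mu[OF x i c] by simp
          finally show ?thesis .
        qed
        have "bl_cov M (U x) (Zbar l) = bl_cov M (U x) (\<lambda>\<omega>. 0 + (\<Sum>j\<in>{1..n i}. (1 / real (n i)) * Z i j c \<omega>))"
          unfolding Zbar_def lic by (simp add: sum_divide_distrib)
        also have "\<dots> = (\<Sum>j\<in>{1..n i}. (1 / real (n i)) * bl_cov M (U x) (Z i j c))"
          by (rule cov_aff2[OF M sU]) (auto intro: L2_Z[OF i _ c])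
        also have "\<dots> = 0" using covUZ by simp
        finally show ?thesis .
      qed
      have covUZZ: "bl_cov M (U x) (ZZ j) = 0" for j
      proof -
        have "bl_cov M (U x) (ZZ j) = (\<Sum>l\<in>K. aecoef M K Zbar (muvec j) l * bl_cov M (U x) (Zbar l))"
          unfolding ZZae ae1_aff by (rule cov_aff2[OF M sU finK sZbar])
        also have "\<dots> = 0" using covUZbar by simp
        finally show ?thesis .
      qed
      define aff where "aff = (\<lambda>\<omega>. 0 + (\<Sum>k\<in>K. A x k * muvec k \<omega>))"
      have saff: "sq_int M aff" unfolding aff_def by (rule sq_int_aff[OF M finK smu])
      have Xeq: "X x \<omega>' = U x \<omega>' + aff \<omega>'" if "\<omega>' \<in> space M" for \<omega>'
        using X_def[OF x that] unfolding aff_def K_def muvec_def by (simp add: split_def)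
      have py: "prev M (X x) = prev M (U x) + (\<Sum>k\<in>K. A x k * prev M (muvec k))"
      proof -
        have "prev M (X x) = prev M (\<lambda>\<omega>'. U x \<omega>' + aff \<omega>')" by (rule prev_cong) (rule Xeq)
        also have "\<dots> = prev M (U x) + prev M aff"
          by (rule prev_add[OF sq_int_integrable[OF M sU] sq_int_integrable[OF M saff]])
        also have "prev M aff = 0 + (\<Sum>k\<in>K. A x k * prev M (muvec k))"
          unfolding aff_def by (rule prev_aff[OF M finK smu])
        finally show ?thesis by simp
      qed
      have cy: "bl_cov M (X x) (ZZ j) = (\<Sum>k\<in>K. A x k * bl_cov M (muvec k) (ZZ j))" if "j \<in> K" for j
      proof -
        have "bl_cov M (X x) (ZZ j) = bl_cov M (\<lambda>\<omega>'. U x \<omega>' + aff \<omega>') (ZZ j)"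
          by (rule cov_cong) (simp_all add: Xeq)
        also have "\<dots> = bl_cov M (U x) (ZZ j) + bl_cov M aff (ZZ j)"
          by (rule cov_add1[OF M sU saff sZZ])
        also have "bl_cov M aff (ZZ j) = (\<Sum>k\<in>K. A x k * bl_cov M (muvec k) (ZZ j))"
          unfolding aff_def by (rule cov_aff1[OF M sZZ finK smu])
        finally show ?thesis using covUZZ by simp
      qed
      have "PX x \<omega> = prev M (U x) + (\<Sum>k\<in>K. A x k * ae1 M K ZZ (muvec k) \<omega>)"
        unfolding PX_def adj_exp_ae1 by (rule ae1_lin[OF finK py cy])
      then show ?thesis unfolding dk_def by (simp add: right_diff_distrib sum_subtractf)
    qed
    have sAd: "sq_int M (\<lambda>\<omega>. \<Sum>k\<in>K. A x k * dk k \<omega>)" for x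
      by (intro sq_int_sum[OF M finK] sq_int_cmult sdk)
    have I1: "integrable M (\<lambda>\<omega>. \<Sum>x\<in>XI. (\<Sum>k\<in>K. A x k * dk k \<omega>)\<^sup>2)"
      using sAd unfolding sq_int_def by (intro Bochner_Integration.integrable_sum) auto
    have I2: "integrable M (\<lambda>\<omega>. CA * (\<Sum>k\<in>K. (dk k \<omega>)\<^sup>2))"
      using sdk unfolding sq_int_def
      by (intro integrable_mult_right Bochner_Integration.integrable_sum) auto
    have "prev M (\<lambda>\<omega>. \<Sum>x\<in>XI. (PX x \<omega> - ((\<Sum>k\<in>K. A x k * muvec k \<omega>) + prev M (U x)))\<^sup>2)
        = prev M (\<lambda>\<omega>. \<Sum>x\<in>XI. (\<Sum>k\<in>K. A x k * dk k \<omega>)\<^sup>2)"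
      by (rule prev_cong) (simp add: lin)
    also have "\<dots> \<le> prev M (\<lambda>\<omega>. CA * (\<Sum>k\<in>K. (dk k \<omega>)\<^sup>2))"
      unfolding prev_def
    proof (rule Bochner_Integration.integral_mono[OF I1 I2])
      fix \<omega>
      have "(\<Sum>x\<in>XI. (\<Sum>k\<in>K. A x k * dk k \<omega>)\<^sup>2) \<le> (\<Sum>x\<in>XI. (\<Sum>k\<in>K. (A x k)\<^sup>2) * (\<Sum>k\<in>K. (dk k \<omega>)\<^sup>2))"
        by (intro sum_mono Cauchy_Schwarz_ineq_sum)
      also have "\<dots> = CA * (\<Sum>k\<in>K. (dk k \<omega>)\<^sup>2)" unfolding CA_def by (simp add: sum_distrib_right)
      finally show "(\<Sum>x\<in>XI. (\<Sum>k\<in>K. A x k * dk k \<omega>)\<^sup>2) \<le> CA * (\<Sum>k\<in>K. (dk k \<omega>)\<^sup>2)" .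
    qed
    also have "\<dots> = CA * (\<Sum>k\<in>K. prev M (\<lambda>\<omega>. (dk k \<omega>)\<^sup>2))"
      unfolding prev_cmult using sdk unfolding sq_int_def by (subst prev_sum[OF finK]) auto
    also have "\<dots> \<le> CA * (\<Sum>k\<in>K. V k / real N)"
      by (intro mult_left_mono sum_mono bound CA0)
    also have "\<dots> = CA * SV / real N" unfolding SV_def sum_divide_distrib[symmetric] by simp
    also have "\<dots> < \<epsilon>" by (rule Neps)
    finally have goal: "prev M (\<lambda>\<omega>. \<Sum>x\<in>XI. (PX x \<omega> - ((\<Sum>k\<in>K. A x k * muvec k \<omega>) + prev M (U x)))\<^sup>2) < \<epsilon>" .
    show "let K = Sigma {..<m} D;
                muvec = (\<lambda>(i, c). mu i c);
                Zbar = (\<lambda>(i, c) \<omega>. (\<Sum>j = 1..n i. Z i j c \<omega>) / real (n i));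
                ZZ = adj_exp M K Zbar muvec;
                PX = adj_exp M K ZZ X
            in prev M (\<lambda>\<omega>. \<Sum>x\<in>XI. (PX x \<omega> - ((\<Sum>k\<in>K. A x k * muvec k \<omega>) + prev M (U x)))\<^sup>2) < \<epsilon>"
      using goal unfolding Let_def K_def muvec_def Zbar_def ZZ_def PX_def .
  qed
qed

end
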